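(* Every binary orchard network is tree-based.
   Context: A (directed phylogenetic) network on a finite taxa set $X$ is a directed acyclic graph without parallel arcs whose nodes are of the following types: a unique root (indegree 0, outdegree 1); tree nodes (indegree 1, outdegree at least 2); reticulations (indegree at least 2, outdegree 1); leaves (indegree 1, outdegree 0), the leaves being bijectively labelled by $X$. A network is binary if every tree node and every reticulation has total degree (indegree plus outdegree) exactly 3. A tree is a network without reticulations. Orchard networks: An ordered pair of leaves $(x,y)$ is a cherry if $x$ and $y$ have a common parent; it is a reticulated cherry if the parent $p_x$ of $x$ is a reticulation and $p_x$ and $y$ have a common parent. Let $p_x,p_y$ be the parents of $x,y$. Reducing $(x,y)$ in a network $N$: if $(x,y)$ is a cherry, delete $x$ and suppress $p_x$ if it now has indegree 1 and outdegree 1; if $(x,y)$ is a reticulated cherry, delete the arc $(p_y,p_x)$ and suppress any resulting node of indegree 1 and outdegree 1; otherwise do nothing. (Suppressing a node $v$ with one parent $u$ and one child $w$ means deleting $v$ and adding the arc $(u,w)$.) For a sequence $S$ of ordered pairs, $NS$ denotes the result of reducing the pairs of $S$ in order. $N$ is orchard if there is a sequence $S$ such that $NS$ is a tree with exactly one leaf. Tree-based: A binary network $N$ is tree-based with base tree $T$ (a binary tree on the same taxa) if $N$ can be obtained from $T$ by: (i) replacing some arcs of $T$ by directed paths whose internal nodes (attachment points) have indegree 1 and outdegree 1; (ii) adding arcs (linking arcs) between attachment points so that no node has total degree greater than 3 and the graph stays acyclic; (iii) suppressing all attachment points not incident to a linking arc. *)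

theory Defs
  imports Main
begin

text \<open>A directed graph is a pair (V, E) of a vertex set and an arc set
  (a set of ordered pairs, hence no parallel arcs).  The leaves of a network
  are identified with their taxa (the labelling is the identity on leaves),
  so the taxa set X of a network G is exactly leaves G.\<close>

type_synonym 'v graph = "'v set \<times> ('v \<times> 'v) set"

definition indeg :: "'v graph \<Rightarrow> 'v \<Rightarrow> nat" where
  "indeg G v = card {u. (u, v) \<in> snd G}"

definition outdeg :: "'v graph \<Rightarrow> 'v \<Rightarrow> nat" where
  "outdeg G v = card {w. (v, w) \<in> snd G}"

definition is_root :: "'v graph \<Rightarrow> 'v \<Rightarrow> bool" where
  "is_root G v \<longleftrightarrow> v \<in> fst G \<and> indeg G v = 0 \<and> outdeg G v = 1"

definition is_tree_node :: "'v graph \<Rightarrow> 'v \<Rightarrow> bool" where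
  "is_tree_node G v \<longleftrightarrow> v \<in> fst G \<and> indeg G v = 1 \<and> outdeg G v \<ge> 2"

definition is_reticulation :: "'v graph \<Rightarrow> 'v \<Rightarrow> bool" where
  "is_reticulation G v \<longleftrightarrow> v \<in> fst G \<and> indeg G v \<ge> 2 \<and> outdeg G v = 1"

definition is_leaf :: "'v graph \<Rightarrow> 'v \<Rightarrow> bool" where
  "is_leaf G v \<longleftrightarrow> v \<in> fst G \<and> indeg G v = 1 \<and> outdeg G v = 0"

definition leaves :: "'v graph \<Rightarrow> 'v set" where
  "leaves G = {v \<in> fst G. is_leaf G v}"

definition network :: "'v graph \<Rightarrow> bool" where
  "network G \<longleftrightarrow> finite (fst G) \<and> snd G \<subseteq> fst G \<times> fst G \<and> acyclic (snd G)
     \<and> (\<exists>!r. is_root G r)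
     \<and> (\<forall>v \<in> fst G. is_root G v \<or> is_tree_node G v \<or> is_reticulation G v \<or> is_leaf G v)"

definition binary :: "'v graph \<Rightarrow> bool" where
  "binary G \<longleftrightarrow> (\<forall>v \<in> fst G. (is_tree_node G v \<longrightarrow> indeg G v + outdeg G v = 3)
                           \<and> (is_reticulation G v \<longrightarrow> indeg G v + outdeg G v = 3))"

definition is_tree :: "'v graph \<Rightarrow> bool" where
  "is_tree G \<longleftrightarrow> network G \<and> (\<forall>v. \<not> is_reticulation G v)"

definition suppress :: "'v \<Rightarrow> 'v graph \<Rightarrow> 'v graph" where
  "suppress v G = (fst G - {v},
     {(a, b) \<in> snd G. a \<noteq> v \<and> b \<noteq> v} \<union> {(u, w). (u, v) \<in> snd G \<and> (v, w) \<in> snd G})"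

definition suppress_if_11 :: "'v \<Rightarrow> 'v graph \<Rightarrow> 'v graph" where
  "suppress_if_11 v G = (if v \<in> fst G \<and> indeg G v = 1 \<and> outdeg G v = 1 then suppress v G else G)"

definition parent :: "'v graph \<Rightarrow> 'v \<Rightarrow> 'v" where
  "parent G x = (THE p. (p, x) \<in> snd G)"

definition cherry :: "'v graph \<Rightarrow> 'v \<Rightarrow> 'v \<Rightarrow> bool" where
  "cherry G x y \<longleftrightarrow> is_leaf G x \<and> is_leaf G y \<and> x \<noteq> y
     \<and> (\<exists>p. (p, x) \<in> snd G \<and> (p, y) \<in> snd G)"

definition ret_cherry :: "'v graph \<Rightarrow> 'v \<Rightarrow> 'v \<Rightarrow> bool" where
  "ret_cherry G x y \<longleftrightarrow> is_leaf G x \<and> is_leaf G y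
     \<and> is_reticulation G (parent G x)
     \<and> (\<exists>q. (q, parent G x) \<in> snd G \<and> (q, y) \<in> snd G)"

definition reduce_pair :: "'v \<times> 'v \<Rightarrow> 'v graph \<Rightarrow> 'v graph" where
  "reduce_pair xy G = (case xy of (x, y) \<Rightarrow>
     if cherry G x y then
       suppress_if_11 (parent G x) (fst G - {x}, {e \<in> snd G. snd e \<noteq> x})
     else if ret_cherry G x y then
       suppress_if_11 (parent G x)
         (suppress_if_11 (parent G y) (fst G, snd G - {(parent G y, parent G x)}))
     else G)"

definition reduce_seq :: "'v graph \<Rightarrow> ('v \<times> 'v) list \<Rightarrow> 'v graph" where
  "reduce_seq G S = fold reduce_pair S G"

definition orchard :: "'v graph \<Rightarrow> bool" where
  "orchard G \<longleftrightarrow> (\<exists>S. is_tree (reduce_seq G S) \<and> card (leaves (reduce_seq G S)) = 1)"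

text \<open>The base tree and the intermediate graphs live on the
  vertex type 'v + nat (leaves Inl x for taxa x, plenty of fresh names);
  the result must be isomorphic to N by an isomorphism fixing the taxa.\<close>

definition path_arcs :: "'w \<Rightarrow> 'w list \<Rightarrow> 'w \<Rightarrow> ('w \<times> 'w) set" where
  "path_arcs u ps w = set (zip (u # ps) (ps @ [w]))"

text \<open>Step (i): each arc e of T is replaced by the path through the attachment
  points P e (empty list = arc not subdivided).\<close>
definition valid_subdivision :: "'w graph \<Rightarrow> ('w \<times> 'w \<Rightarrow> 'w list) \<Rightarrow> bool" where
  "valid_subdivision T P \<longleftrightarrow>
     (\<forall>e \<in> snd T. distinct (P e) \<and> set (P e) \<inter> fst T = {})
     \<and> (\<forall>e \<in> snd T. \<forall>e' \<in> snd T. e \<noteq> e' \<longrightarrow> set (P e) \<inter> set (P e') = {})"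

definition attachment_points :: "'w graph \<Rightarrow> ('w \<times> 'w \<Rightarrow> 'w list) \<Rightarrow> 'w set" where
  "attachment_points T P = (\<Union>e \<in> snd T. set (P e))"

definition subdivide :: "'w graph \<Rightarrow> ('w \<times> 'w \<Rightarrow> 'w list) \<Rightarrow> 'w graph" where
  "subdivide T P = (fst T \<union> attachment_points T P,
                    \<Union>e \<in> snd T. path_arcs (fst e) (P e) (snd e))"

definition tree_based_with :: "'v graph \<Rightarrow> ('v + nat) graph \<Rightarrow> bool" where
  "tree_based_with N T \<longleftrightarrow>
     is_tree T \<and> binary T \<and> leaves T = Inl ` leaves N \<and>
     (\<exists>P L xs f.
        valid_subdivision T P \<and>
        \<comment> \<open>(ii) linking arcs between attachment points\<close>
        L \<subseteq> attachment_points T P \<times> attachment_points T P \<and>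
        L \<inter> snd (subdivide T P) = {} \<and>
        (let G2 = (fst (subdivide T P), snd (subdivide T P) \<union> L) in
          (\<forall>v \<in> fst G2. indeg G2 v + outdeg G2 v \<le> 3) \<and> acyclic (snd G2) \<and>
          \<comment> \<open>(iii) suppress the attachment points not incident to a linking arc\<close>
          distinct xs \<and>
          set xs = {a \<in> attachment_points T P. \<forall>b. (a, b) \<notin> L \<and> (b, a) \<notin> L} \<and>
          (let G3 = fold suppress xs G2 in
             bij_betw f (fst G3) (fst N) \<and>
             (\<forall>a \<in> fst G3. \<forall>b \<in> fst G3. (a, b) \<in> snd G3 \<longleftrightarrow> (f a, f b) \<in> snd N) \<and>
             (\<forall>x \<in> leaves N. f (Inl x) = x))))"

definition tree_based :: "'v graph \<Rightarrow> bool" where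
  "tree_based N \<longleftrightarrow> binary N \<and> network N \<and> (\<exists>T. tree_based_with N T)"

end

theory Submission
  imports Defs
begin



definition inn :: "'v graph \<Rightarrow> 'v \<Rightarrow> 'v set" where "inn G v = {u. (u,v) \<in> snd G}"
definition outn :: "'v graph \<Rightarrow> 'v \<Rightarrow> 'v set" where "outn G v = {w. (v,w) \<in> snd G}"

lemma indeg_inn: "indeg G v = card (inn G v)" by (simp add: indeg_def inn_def)
lemma outdeg_outn: "outdeg G v = card (outn G v)" by (simp add: outdeg_def outn_def)

definition wf_graph :: "'v graph \<Rightarrow> bool" where
  "wf_graph G \<longleftrightarrow> finite (fst G) \<and> snd G \<subseteq> fst G \<times> fst G"

lemma wf_graph_fin_E: "wf_graph G \<Longrightarrow> finite (snd G)"
  unfolding wf_graph_def by (meson finite_SigmaI finite_subset)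

lemma fin_inn: "wf_graph G \<Longrightarrow> finite (inn G v)"
proof -
  assume a: "wf_graph G"
  have "inn G v \<subseteq> fst ` snd G" unfolding inn_def by force
  thus ?thesis using wf_graph_fin_E[OF a] finite_subset by blast
qed

lemma fin_outn: "wf_graph G \<Longrightarrow> finite (outn G v)"
proof -
  assume a: "wf_graph G"
  have "outn G v \<subseteq> snd ` snd G" unfolding outn_def by force
  thus ?thesis using wf_graph_fin_E[OF a] finite_subset by blast
qed

lemma network_wf: "network G \<Longrightarrow> wf_graph G"
  unfolding network_def wf_graph_def by auto

lemma suppress_fst: "fst (suppress v G) = fst G - {v}" by (simp add: suppress_def)

lemma suppress_inn:
  assumes "inn G v = {u}" "outn G v = {w}" "t \<noteq> v"
  shows "inn (suppress v G) t = (if t = w then insert u (inn G t - {v}) else inn G t)"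
  using assms unfolding inn_def outn_def suppress_def by auto

lemma suppress_outn:
  assumes "inn G v = {u}" "outn G v = {w}" "t \<noteq> v"
  shows "outn (suppress v G) t = (if t = u then insert w (outn G t - {v}) else outn G t)"
  using assms unfolding inn_def outn_def suppress_def by auto

lemma suppress_E: 
  assumes "inn G v = {u}" "outn G v = {w}"
  shows "snd (suppress v G) = {(a, b) \<in> snd G. a \<noteq> v \<and> b \<noteq> v} \<union> {(u,w)}"
  using assms unfolding inn_def outn_def suppress_def by auto

lemma suppress_deg:
  assumes "wf_graph G" "inn G v = {u}" "outn G v = {w}" "t \<noteq> v" "(u,w) \<notin> snd G"
  shows "indeg (suppress v G) t = indeg G t \<and> outdeg (suppress v G) t = outdeg G t"
proof -
  have f1: "finite (inn G t)" "finite (outn G t)" using fin_inn[OF assms(1)] fin_outn[OF assms(1)] by auto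
  have "indeg (suppress v G) t = indeg G t"
  proof (cases "t = w")
    case True
    have "v \<in> inn G t" "u \<notin> inn G t" using assms True unfolding inn_def outn_def by auto
    moreover have "card (inn G t) > 0" using f1 \<open>v \<in> inn G t\<close> card_gt_0_iff by blast
    ultimately show ?thesis unfolding indeg_inn using suppress_inn[OF assms(2,3,4)] True f1
      by (simp add: card_insert_if)
  next
    case False
    then show ?thesis unfolding indeg_inn using suppress_inn[OF assms(2,3,4)] by simp
  qed
  moreover have "outdeg (suppress v G) t = outdeg G t"
  proof (cases "t = u")
    case True
    have "v \<in> outn G t" "w \<notin> outn G t" using assms True unfolding inn_def outn_def by auto
    moreover have "card (outn G t) > 0" using f1 \<open>v \<in> outn G t\<close> card_gt_0_iff by blast
    ultimately show ?thesis unfolding outdeg_outn using suppress_outn[OF assms(2,3,4)] True f1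
      by (simp add: card_insert_if)
  next
    case False
    then show ?thesis unfolding outdeg_outn using suppress_outn[OF assms(2,3,4)] by simp
  qed
  ultimately show ?thesis by simp
qed

lemma suppress_wf:
  assumes "wf_graph G" "inn G v = {u}" "outn G v = {w}" "u \<noteq> v" "w \<noteq> v"
  shows "wf_graph (suppress v G)"
proof -
  have "u \<in> fst G" "w \<in> fst G" using assms unfolding wf_graph_def inn_def outn_def by auto
  then show ?thesis using assms unfolding wf_graph_def suppress_E[OF assms(2,3)] suppress_fst by auto
qed

lemma acyclic_via_trancl:
  assumes "acyclic E" "E' \<subseteq> E\<^sup>+" shows "acyclic E'"
proof -
  have "E'\<^sup>+ \<subseteq> E\<^sup>+" using assms(2) using trancl_mono_subset[OF assms(2)] trancl_id[OF trans_trancl] by simp 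
  thus ?thesis using assms(1) unfolding acyclic_def by blast
qed

lemma suppress_sub_trancl:
  assumes "inn G v = {u}" "outn G v = {w}"
  shows "snd (suppress v G) \<subseteq> (snd G)\<^sup>+"
proof -
  have "(u,v) \<in> snd G" "(v,w) \<in> snd G" using assms unfolding inn_def outn_def by auto
  hence "(u,w) \<in> (snd G)\<^sup>+" by auto
  thus ?thesis unfolding suppress_E[OF assms] by auto
qed

lemma suppress_acyclic:
  assumes "acyclic (snd G)" "inn G v = {u}" "outn G v = {w}"
  shows "acyclic (snd (suppress v G))"
  using acyclic_via_trancl[OF assms(1) suppress_sub_trancl[OF assms(2,3)]] .

lemma suppress_if_11_eq:
  assumes "wf_graph G" "v \<in> fst G" "inn G v = {u}" "outn G v = {w}"
  shows "suppress_if_11 v G = suppress v G"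
  using assms unfolding suppress_if_11_def indeg_inn outdeg_outn by simp

lemma parent_eq: "inn G x = {p} \<Longrightarrow> parent G x = p"
  unfolding parent_def inn_def by auto




lemma card1_mem: "card S = Suc 0 \<Longrightarrow> a \<in> S \<Longrightarrow> S = {a}"
  by (auto simp: card_Suc_eq)

lemma network_class:
  assumes "network G" "binary G" "v \<in> fst G"
  shows "(indeg G v = 0 \<and> outdeg G v = 1) \<or> (indeg G v = 1 \<and> outdeg G v = 2)
       \<or> (indeg G v = 2 \<and> outdeg G v = 1) \<or> (indeg G v = 1 \<and> outdeg G v = 0)"
proof -
  have "\<forall>v\<in>fst G. is_root G v \<or> is_tree_node G v \<or> is_reticulation G v \<or> is_leaf G v"
    using assms(1) unfolding network_def by blast
  hence "is_root G v \<or> is_tree_node G v \<or> is_reticulation G v \<or> is_leaf G v" using assms(3) by blast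
  moreover have "is_tree_node G v \<longrightarrow> indeg G v + outdeg G v = 3"
    "is_reticulation G v \<longrightarrow> indeg G v + outdeg G v = 3" using assms(2,3) unfolding binary_def by blast+
  ultimately show ?thesis unfolding is_root_def is_tree_node_def is_reticulation_def is_leaf_def
    by linarith
qed

lemma out2: "network G \<Longrightarrow> binary G \<Longrightarrow> v \<in> fst G \<Longrightarrow> outdeg G v \<ge> 2 \<Longrightarrow> indeg G v = 1 \<and> outdeg G v = 2"
  using network_class[of G v] by linarith
lemma in2: "network G \<Longrightarrow> binary G \<Longrightarrow> v \<in> fst G \<Longrightarrow> indeg G v \<ge> 2 \<Longrightarrow> indeg G v = 2 \<and> outdeg G v = 1"
  using network_class[of G v] by linarith

definition good :: "'v graph \<Rightarrow> ('v \<times> 'v) set \<Rightarrow> bool" where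
 "good N L \<longleftrightarrow> L \<subseteq> snd N \<and> (\<forall>v\<in>fst N. indeg N v \<ge> 2 \<longrightarrow> (\<exists>!u. (u,v) \<in> L))
    \<and> (\<forall>u v. (u,v)\<in>L \<longrightarrow> indeg N v \<ge> 2 \<and> outdeg N u \<ge> 2 \<and> (\<forall>w. (u,w) \<in> L \<longrightarrow> w = v))"

lemma net_pres:
  assumes "network G" "binary G" "wf_graph G'" "fst G' \<subseteq> fst G" "acyclic (snd G')"
    "\<forall>t\<in>fst G'. indeg G' t = indeg G t \<and> outdeg G' t = outdeg G t"
    "\<forall>r. is_root G r \<longrightarrow> r \<in> fst G'"
  shows "network G' \<and> binary G'"
proof -
  have d: "indeg G' t = indeg G t" "outdeg G' t = outdeg G t" if "t \<in> fst G'" for t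
    using assms(6) that by blast+
  obtain r where r: "is_root G r" "\<And>r'. is_root G r' \<Longrightarrow> r' = r" using assms(1) unfolding network_def by blast
  have rG': "r \<in> fst G'" using r(1) assms(7) by blast
  have rr: "is_root G' r" using r(1) d[OF rG'] rG' unfolding is_root_def by simp
  have un: "r' = r" if "is_root G' r'" for r'
  proof -
    have "r' \<in> fst G'" using that unfolding is_root_def by simp
    hence "is_root G r'" using that assms(4) d[of r'] unfolding is_root_def by auto
    thus "r' = r" using r(2) by blast
  qed
  have ex: "\<exists>!r. is_root G' r" using rr un by blast
  have cl: "\<forall>v \<in> fst G'. is_root G' v \<or> is_tree_node G' v \<or> is_reticulation G' v \<or> is_leaf G' v"
  proof
    fix v assume v: "v \<in> fst G'"
    hence "v \<in> fst G" using assms(4) by auto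
    moreover have "\<forall>v\<in>fst G. is_root G v \<or> is_tree_node G v \<or> is_reticulation G v \<or> is_leaf G v"
      using assms(1) unfolding network_def by blast
    ultimately have "is_root G v \<or> is_tree_node G v \<or> is_reticulation G v \<or> is_leaf G v"
      by blast
    thus "is_root G' v \<or> is_tree_node G' v \<or> is_reticulation G' v \<or> is_leaf G' v"
      using v d[OF v] unfolding is_root_def is_tree_node_def is_reticulation_def is_leaf_def by auto
  qed
  have "network G'" unfolding network_def using ex cl assms(3,5) unfolding wf_graph_def by blast
  moreover have "binary G'" unfolding binary_def
  proof (intro ballI conjI impI)
    fix v assume v: "v \<in> fst G'"
    hence v': "v \<in> fst G" using assms(4) by auto
    note dd = d[OF v]
    have b: "is_tree_node G v \<longrightarrow> indeg G v + outdeg G v = 3" "is_reticulation G v \<longrightarrow> indeg G v + outdeg G v = 3"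
      using assms(2) v' unfolding binary_def by blast+
    { assume "is_tree_node G' v" hence "is_tree_node G v" using v' dd unfolding is_tree_node_def by simp
      thus "indeg G' v + outdeg G' v = 3" using b dd by simp }
    { assume "is_reticulation G' v" hence "is_reticulation G v" using v' dd unfolding is_reticulation_def by simp
      thus "indeg G' v + outdeg G' v = 3" using b dd by simp }
  qed
  ultimately show ?thesis by simp
qed

lemma lift1:
  assumes "fst G' \<subseteq> fst G" "snd G' \<subseteq> fst G' \<times> fst G'"
    "\<forall>t\<in>fst G'. indeg G' t = indeg G t \<and> outdeg G' t = outdeg G t"
    "\<forall>v\<in>fst G - fst G'. indeg G v < 2" "good G' L'" "L' \<subseteq> snd G"
  shows "good G L'"
proof -
  have LV: "L' \<subseteq> fst G' \<times> fst G'" using assms(2,5) unfolding good_def by auto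
  show ?thesis unfolding good_def
  proof (intro conjI allI impI ballI)
    show "L' \<subseteq> snd G" by fact
  next
    fix v assume "v \<in> fst G" "2 \<le> indeg G v"
    hence "v \<in> fst G'" using assms(4) by force
    thus "\<exists>!u. (u, v) \<in> L'" using assms(3,5) \<open>2 \<le> indeg G v\<close> unfolding good_def by auto
  next
    fix u v assume a: "(u,v) \<in> L'"
    have uv: "u \<in> fst G'" "v \<in> fst G'" using a LV by auto
    have dd: "2 \<le> indeg G' v" "2 \<le> outdeg G' u" using a assms(5) unfolding good_def by blast+
    show "2 \<le> indeg G v" using uv dd assms(3) by auto
    show "2 \<le> outdeg G u" using uv dd assms(3) by auto
    fix w assume "(u, w) \<in> L'"
    thus "w = v" using a assms(5) unfolding good_def by blast
  qed
qed

lemma lift2: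
  assumes "fst G' \<subseteq> fst G" "snd G' \<subseteq> fst G' \<times> fst G'"
    "\<forall>t\<in>fst G'. indeg G' t = indeg G t \<and> outdeg G' t = outdeg G t"
    "\<forall>v\<in>fst G - fst G'. v \<noteq> b0 \<longrightarrow> indeg G v < 2" "good G' L'" "L' \<subseteq> snd G"
    "(a0,b0) \<in> snd G" "a0 \<notin> fst G'" "b0 \<notin> fst G'" "indeg G b0 \<ge> 2" "outdeg G a0 \<ge> 2"
  shows "good G (insert (a0,b0) L')"
proof -
  have LV: "L' \<subseteq> fst G' \<times> fst G'" using assms(2,5) unfolding good_def by auto
  show ?thesis unfolding good_def
  proof (intro conjI allI impI ballI)
    show "insert (a0,b0) L' \<subseteq> snd G" using assms(6,7) by auto
  next
    fix v assume v: "v \<in> fst G" "2 \<le> indeg G v"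
    show "\<exists>!u. (u, v) \<in> insert (a0,b0) L'"
    proof (cases "v = b0")
      case True
      then show ?thesis using LV assms(9) by auto
    next
      case False
      hence "v \<in> fst G'" using assms(4) v by force
      hence "\<exists>!u. (u, v) \<in> L'" using assms(3,5) v unfolding good_def by auto
      thus ?thesis using False by auto
    qed
  next
    fix u v assume a: "(u,v) \<in> insert (a0,b0) L'"
    have "2 \<le> indeg G v \<and> 2 \<le> outdeg G u"
    proof (cases "(u,v) = (a0,b0)")
      case True thus ?thesis using assms(10,11) by auto
    next
      case False
      hence a': "(u,v) \<in> L'" using a by auto
      have uv: "u \<in> fst G'" "v \<in> fst G'" using a' LV by auto
      have dd: "2 \<le> indeg G' v" "2 \<le> outdeg G' u" using a' assms(5) unfolding good_def by blast+
      show ?thesis using uv dd assms(3) by auto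
    qed
    thus "2 \<le> indeg G v" "2 \<le> outdeg G u" by auto
    fix w assume w: "(u, w) \<in> insert (a0, b0) L'"
    show "w = v"
    proof (cases "(u,v) = (a0,b0)")
      case True
      then show ?thesis using w LV assms(8) by auto
    next
      case False
      hence a': "(u,v) \<in> L'" using a by auto
      hence "u \<in> fst G'" using LV by auto
      hence "u \<noteq> a0" using assms(8) by auto
      hence "(u,w) \<in> L'" using w by auto
      thus ?thesis using a' assms(5) unfolding good_def by blast
    qed
  qed
qed




lemma acyc_irrefl: "acyclic E \<Longrightarrow> (a,a) \<notin> E"
  unfolding acyclic_def by blast

lemma acyc_2: "acyclic E \<Longrightarrow> (a,b) \<in> E \<Longrightarrow> (b,a) \<notin> E"
  unfolding acyclic_def by (meson r_into_trancl trancl_trans)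

lemma inn_single: "indeg G v = 1 \<Longrightarrow> (p,v) \<in> snd G \<Longrightarrow> inn G v = {p}"
  using card1_mem[of "inn G v" p] unfolding indeg_inn inn_def by simp

lemma outn_empty: "wf_graph G \<Longrightarrow> outdeg G v = 0 \<Longrightarrow> outn G v = {}"
  using fin_outn[of G v] unfolding outdeg_outn by simp

lemma inn_ex1: "indeg G v = 1 \<Longrightarrow> \<exists>g. inn G v = {g}"
  unfolding indeg_inn by (simp add: card_Suc_eq)

lemma outn_ex1: "outdeg G v = 1 \<Longrightarrow> \<exists>g. outn G v = {g}"
  unfolding outdeg_outn by (simp add: card_Suc_eq)

lemma card2_eq: "finite S \<Longrightarrow> card S = 2 \<Longrightarrow> a \<in> S \<Longrightarrow> b \<in> S \<Longrightarrow> a \<noteq> b \<Longrightarrow> S = {a,b}"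
  proof -
  assume a: "finite S" "card S = 2" "a \<in> S" "b \<in> S" "a \<noteq> b"
  have "{a,b} \<subseteq> S" using a by auto
  moreover have "card {a,b} = card S" using a by simp
  ultimately show ?thesis using card_subset_eq[OF a(1)] by blast
qed

lemma card_ge2: "finite S \<Longrightarrow> a \<in> S \<Longrightarrow> b \<in> S \<Longrightarrow> a \<noteq> b \<Longrightarrow> card S \<ge> 2"
proof -
  assume "finite S" "a \<in> S" "b \<in> S" "a \<noteq> b"
  hence "card {a,b} \<le> card S" by (intro card_mono) auto
  thus ?thesis using \<open>a \<noteq> b\<close> by simp
qed

definition del_leaf :: "'v \<Rightarrow> 'v graph \<Rightarrow> 'v graph" where
  "del_leaf x G = (fst G - {x}, {e \<in> snd G. snd e \<noteq> x})"

lemma del_leaf_inn: "t \<noteq> x \<Longrightarrow> inn (del_leaf x G) t = inn G t"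
  unfolding inn_def del_leaf_def by auto
lemma del_leaf_outn: "outn (del_leaf x G) t = outn G t - {x}"
  unfolding outn_def del_leaf_def by auto
lemma del_leaf_wf: "wf_graph G \<Longrightarrow> outn G x = {} \<Longrightarrow> wf_graph (del_leaf x G)"
  unfolding wf_graph_def del_leaf_def outn_def by auto
lemma del_leaf_sub: "snd (del_leaf x G) \<subseteq> snd G"
  unfolding del_leaf_def by auto

lemma net_acyclic: "network G \<Longrightarrow> acyclic (snd G)" unfolding network_def by blast

lemma cherry_red:
  assumes N: "network G" and B: "binary G" and C: "cherry G x y"
  shows "network (reduce_pair (x,y) G) \<and> binary (reduce_pair (x,y) G) \<and>
         (\<forall>L'. good (reduce_pair (x,y) G) L' \<longrightarrow> (\<exists>L. good G L))"
proof -
  have wf: "wf_graph G" using network_wf[OF N] .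
  have ac: "acyclic (snd G)" using net_acyclic[OF N] .
  obtain p where px: "(p,x) \<in> snd G" and py: "(p,y) \<in> snd G" and xy: "x \<noteq> y"
    and lx: "is_leaf G x" and ly: "is_leaf G y" using C unfolding cherry_def by blast
  have ix: "inn G x = {p}" using inn_single[OF _ px] lx unfolding is_leaf_def by simp
  have iy: "inn G y = {p}" using inn_single[OF _ py] ly unfolding is_leaf_def by simp
  have ox: "outn G x = {}" using outn_empty[OF wf] lx unfolding is_leaf_def by simp
  have pV: "p \<in> fst G" using px wf unfolding wf_graph_def by auto
  have xV: "x \<in> fst G" "y \<in> fst G" using lx ly unfolding is_leaf_def by auto
  have "p \<noteq> x" using px acyc_irrefl[OF ac] by auto
  have "p \<noteq> y" using py acyc_irrefl[OF ac] by auto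
  have "x \<in> outn G p" "y \<in> outn G p" using px py unfolding outn_def by auto
  hence "outdeg G p \<ge> 2" unfolding outdeg_outn using card_ge2[OF fin_outn[OF wf]] xy by blast
  hence pd: "indeg G p = 1" "outdeg G p = 2" using out2[OF N B pV] by auto
  have op: "outn G p = {x,y}" using card2_eq[OF fin_outn[OF wf]] pd(2) px py xy
    unfolding outdeg_outn outn_def by auto
  obtain g where ip: "inn G p = {g}" using inn_ex1[OF pd(1)] by blast
  have gp: "(g,p) \<in> snd G" using ip unfolding inn_def by auto
  have "g \<noteq> p" using gp acyc_irrefl[OF ac] by auto
  have par: "parent G x = p" using parent_eq[OF ix] .
  define G1 where "G1 = del_leaf x G"
  have wf1: "wf_graph G1" unfolding G1_def using del_leaf_wf[OF wf ox] .
  have ip1: "inn G1 p = {g}" unfolding G1_def using del_leaf_inn[OF \<open>p \<noteq> x\<close>, of G] ip by simp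
  have op1: "outn G1 p = {y}" unfolding G1_def using del_leaf_outn[of x G p] op xy by auto
  have pV1: "p \<in> fst G1" unfolding G1_def del_leaf_def using pV \<open>p \<noteq> x\<close> by simp
  have red: "reduce_pair (x,y) G = suppress p G1"
    unfolding reduce_pair_def using C par suppress_if_11_eq[OF wf1 pV1 ip1 op1]
    by (simp add: G1_def del_leaf_def)
  define G' where "G' = suppress p G1"
  have gy: "(g,y) \<notin> snd G1"
  proof
    assume "(g,y) \<in> snd G1"
    hence "(g,y) \<in> snd G" using del_leaf_sub[of x G] unfolding G1_def by blast
    hence "g \<in> inn G y" unfolding inn_def by simp
    thus False using iy \<open>g \<noteq> p\<close> by simp
  qed
  have fG': "fst G' = fst G - {x} - {p}" unfolding G'_def suppress_fst G1_def del_leaf_def by simp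
  have deg: "\<forall>t\<in>fst G'. indeg G' t = indeg G t \<and> outdeg G' t = outdeg G t"
  proof
    fix t assume t: "t \<in> fst G'"
    hence tx: "t \<noteq> x" "t \<noteq> p" using fG' by auto
    have d1: "indeg G' t = indeg G1 t \<and> outdeg G' t = outdeg G1 t"
      unfolding G'_def using suppress_deg[OF wf1 ip1 op1 tx(2) gy] .
    have "indeg G1 t = indeg G t" unfolding indeg_inn G1_def using del_leaf_inn[OF tx(1), of G] by simp
    moreover have "x \<notin> outn G t" using ix tx(2) unfolding inn_def outn_def by auto
    hence "outdeg G1 t = outdeg G t" unfolding outdeg_outn G1_def using del_leaf_outn[of x G t] by simp
    ultimately show "indeg G' t = indeg G t \<and> outdeg G' t = outdeg G t" using d1 by simp
  qed
  have wf': "wf_graph G'" unfolding G'_def using suppress_wf[OF wf1 ip1 op1 \<open>g \<noteq> p\<close>] \<open>p \<noteq> y\<close> by auto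
  have ac1: "acyclic (snd G1)" using acyclic_subset[OF ac del_leaf_sub[of x G]] unfolding G1_def .
  have ac': "acyclic (snd G')" unfolding G'_def using suppress_acyclic[OF ac1 ip1 op1] .
  have rt: "\<forall>r. is_root G r \<longrightarrow> r \<in> fst G'"
  proof (intro allI impI)
    fix r assume "is_root G r"
    hence "r \<in> fst G" "indeg G r = 0" unfolding is_root_def by auto
    moreover have "indeg G x = 1" using lx unfolding is_leaf_def by simp
    ultimately have "r \<noteq> x" "r \<noteq> p" "r \<in> fst G" using pd(1) by auto
    thus "r \<in> fst G'" unfolding fG' by blast
  qed
  have sub: "fst G' \<subseteq> fst G" unfolding fG' by blast
  have nb: "network G' \<and> binary G'" using net_pres[OF N B wf' sub ac' deg rt] .
  have lift: "\<exists>L. good G L" if gL: "good G' L'" for L'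
  proof -
    have yG': "y \<in> fst G'" unfolding fG' using xV xy \<open>p \<noteq> y\<close> by blast
    have "indeg G' y = indeg G y" using deg yG' by blast
    hence y1: "indeg G' y = 1" using ly unfolding is_leaf_def by simp
    have "(g,y) \<notin> L'"
    proof
      assume "(g,y) \<in> L'"
      hence "2 \<le> indeg G' y" using gL unfolding good_def by blast
      thus False using y1 by simp
    qed
    moreover have "L' \<subseteq> snd G'" using gL unfolding good_def by blast
    ultimately have "L' \<subseteq> snd G1" unfolding G'_def suppress_E[OF ip1 op1] by blast
    hence s1: "L' \<subseteq> snd G" using del_leaf_sub[of x G] unfolding G1_def by blast
    have s2: "\<forall>v\<in>fst G - fst G'. indeg G v < 2" unfolding fG' using pd(1) lx unfolding is_leaf_def by auto
    have s3: "snd G' \<subseteq> fst G' \<times> fst G'" using wf' unfolding wf_graph_def by blast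
    have "good G L'" by (rule lift1[OF sub s3 deg s2 gL s1])
    thus ?thesis by blast
  qed
  have "\<forall>L'. good G' L' \<longrightarrow> (\<exists>L. good G L)" using lift by blast
  thus ?thesis using nb red unfolding G'_def by simp
qed




definition del_arc :: "'v \<Rightarrow> 'v \<Rightarrow> 'v graph \<Rightarrow> 'v graph" where
  "del_arc a b G = (fst G, snd G - {(a,b)})"

lemma del_arc_inn: "inn (del_arc a b G) t = (if t = b then inn G t - {a} else inn G t)"
  unfolding inn_def del_arc_def by auto
lemma del_arc_outn: "outn (del_arc a b G) t = (if t = a then outn G t - {b} else outn G t)"
  unfolding outn_def del_arc_def by auto
lemma del_arc_wf: "wf_graph G \<Longrightarrow> wf_graph (del_arc a b G)"
  unfolding wf_graph_def del_arc_def by auto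
lemma del_arc_sub: "snd (del_arc a b G) \<subseteq> snd G"
  unfolding del_arc_def by auto
lemma del_arc_fst: "fst (del_arc a b G) = fst G"
  unfolding del_arc_def by auto

lemma ret_red:
  assumes N: "network G" and B: "binary G" and C: "ret_cherry G x y"
  shows "network (reduce_pair (x,y) G) \<and> binary (reduce_pair (x,y) G) \<and>
         (\<forall>L'. good (reduce_pair (x,y) G) L' \<longrightarrow> (\<exists>L. good G L))"
proof -
  have wf: "wf_graph G" using network_wf[OF N] .
  have ac: "acyclic (snd G)" using net_acyclic[OF N] .
  define px where "px = parent G x"
  have lx: "is_leaf G x" and ly: "is_leaf G y" and rpx: "is_reticulation G px"
    using C unfolding ret_cherry_def px_def by blast+
  obtain q where qpx: "(q,px) \<in> snd G" and qy: "(q,y) \<in> snd G"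
    using C unfolding ret_cherry_def px_def by blast
  obtain p0 where ix0: "inn G x = {p0}" using inn_ex1[of G x] lx unfolding is_leaf_def by blast
  have "parent G x = p0" using parent_eq[OF ix0] .
  hence ix: "inn G x = {px}" using ix0 px_def by simp
  have pxx: "(px,x) \<in> snd G" using ix unfolding inn_def by auto
  have iy: "inn G y = {q}" using inn_single[OF _ qy] ly unfolding is_leaf_def by simp
  have pary: "parent G y = q" using parent_eq[OF iy] .
  have xV: "x \<in> fst G" "y \<in> fst G" using lx ly unfolding is_leaf_def by auto
  have pxV: "px \<in> fst G" using rpx unfolding is_reticulation_def by simp
  have qV: "q \<in> fst G" using qy wf unfolding wf_graph_def by auto
  have pxd: "indeg G px = 2" "outdeg G px = 1" using in2[OF N B pxV] rpx unfolding is_reticulation_def by auto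
  have opx: "outn G px = {x}"
    using card1_mem[of "outn G px" x] pxd(2) pxx unfolding outdeg_outn outn_def by simp
  obtain z where ipx: "inn G px = {q,z}" and zq: "z \<noteq> q"
  proof -
    obtain a b where ab: "inn G px = {a,b}" "a \<noteq> b" using pxd(1) unfolding indeg_inn card_2_iff by blast
    have "q \<in> inn G px" using qpx unfolding inn_def by simp
    hence "(a = q \<and> inn G px = {q,b} \<and> b \<noteq> q) \<or> (b = q \<and> inn G px = {q,a} \<and> a \<noteq> q)" using ab by auto
    thus ?thesis using that by blast
  qed
  have zpx: "(z,px) \<in> snd G" using ipx unfolding inn_def by auto
  have "px \<noteq> q" using qpx acyc_irrefl[OF ac] by auto
  have "z \<noteq> px" using zpx acyc_irrefl[OF ac] by auto
  have "x \<noteq> px" using pxx acyc_irrefl[OF ac] by auto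
  have "y \<noteq> q" using qy acyc_irrefl[OF ac] by auto
  have "x \<noteq> y"
  proof
    assume "x = y"
    hence "q = px" using ix iy by simp
    thus False using \<open>px \<noteq> q\<close> by simp
  qed
  have "px \<noteq> y" using pxd(1) ly unfolding is_leaf_def by auto
  have "x \<noteq> q"
  proof
    assume "x = q"
    hence "y \<in> outn G x" using qy unfolding outn_def by simp
    thus False using outn_empty[OF wf] lx unfolding is_leaf_def by simp
  qed
  have "px \<in> outn G q" "y \<in> outn G q" using qpx qy unfolding outn_def by auto
  hence "outdeg G q \<ge> 2" unfolding outdeg_outn using card_ge2[OF fin_outn[OF wf]] \<open>px \<noteq> y\<close> by blast
  hence qd: "indeg G q = 1" "outdeg G q = 2" using out2[OF N B qV] by auto
  have oq: "outn G q = {px,y}" using card2_eq[OF fin_outn[OF wf]] qd(2) qpx qy \<open>px \<noteq> y\<close>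
    unfolding outdeg_outn outn_def by auto
  obtain g where iq: "inn G q = {g}" using inn_ex1[OF qd(1)] by blast
  have gq: "(g,q) \<in> snd G" using iq unfolding inn_def by auto
  have "g \<noteq> q" using gq acyc_irrefl[OF ac] by auto
  have "g \<noteq> px" using gq qpx acyc_2[OF ac] by auto
  have ncherry: "\<not> cherry G x y"
  proof
    assume "cherry G x y"
    then obtain p where "(p,x) \<in> snd G" "(p,y) \<in> snd G" unfolding cherry_def by blast
    hence "p = px" "p = q" using ix iy unfolding inn_def by auto
    thus False using \<open>px \<noteq> q\<close> by simp
  qed
  define G1 where "G1 = del_arc q px G"
  have wf1: "wf_graph G1" unfolding G1_def using del_arc_wf[OF wf] .
  have iq1: "inn G1 q = {g}" unfolding G1_def using del_arc_inn[of q px G q] iq \<open>px \<noteq> q\<close> by simp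
  have oq1: "outn G1 q = {y}" unfolding G1_def using del_arc_outn[of q px G q] oq \<open>px \<noteq> y\<close> by auto
  have qV1: "q \<in> fst G1" unfolding G1_def del_arc_fst using qV .
  have gy: "(g,y) \<notin> snd G1"
  proof
    assume "(g,y) \<in> snd G1"
    hence "(g,y) \<in> snd G" using del_arc_sub[of q px G] unfolding G1_def by blast
    hence "g \<in> inn G y" unfolding inn_def by simp
    thus False using iy \<open>g \<noteq> q\<close> by simp
  qed
  define G2 where "G2 = suppress q G1"
  have fG2: "fst G2 = fst G - {q}" unfolding G2_def suppress_fst G1_def del_arc_fst ..
  have wf2: "wf_graph G2" unfolding G2_def using suppress_wf[OF wf1 iq1 oq1 \<open>g \<noteq> q\<close>] \<open>y \<noteq> q\<close> by auto
  have ipx2: "inn G2 px = {z}"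
  proof -
    have "inn G2 px = inn G1 px" unfolding G2_def using suppress_inn[OF iq1 oq1, of px] \<open>px \<noteq> q\<close> \<open>px \<noteq> y\<close> by simp
    also have "\<dots> = {z}" unfolding G1_def using del_arc_inn[of q px G px] ipx zq by auto
    finally show ?thesis .
  qed
  have opx2: "outn G2 px = {x}"
  proof -
    have "outn G2 px = outn G1 px" unfolding G2_def using suppress_outn[OF iq1 oq1, of px] \<open>px \<noteq> q\<close> \<open>g \<noteq> px\<close> by auto
    also have "\<dots> = {x}" unfolding G1_def using del_arc_outn[of q px G px] opx \<open>px \<noteq> q\<close> by simp
    finally show ?thesis .
  qed
  have pxV2: "px \<in> fst G2" unfolding fG2 using pxV \<open>px \<noteq> q\<close> by blast
  have zx: "(z,x) \<notin> snd G2"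
  proof
    assume "(z,x) \<in> snd G2"
    hence "z \<in> inn G2 x" unfolding inn_def by simp
    moreover have "inn G2 x = inn G1 x" unfolding G2_def using suppress_inn[OF iq1 oq1, of x] \<open>x \<noteq> q\<close> \<open>x \<noteq> y\<close> by simp
    moreover have "inn G1 x = inn G x" unfolding G1_def using del_arc_inn[of q px G x] \<open>x \<noteq> px\<close> by simp
    ultimately show False using ix \<open>z \<noteq> px\<close> by simp
  qed
  define G3 where "G3 = suppress px G2"
  have red: "reduce_pair (x,y) G = G3"
  proof -
    have "reduce_pair (x,y) G = suppress_if_11 px (suppress_if_11 q (fst G, snd G - {(q, px)}))"
      unfolding reduce_pair_def using ncherry C pary px_def by simp
    also have "(fst G, snd G - {(q, px)}) = G1" unfolding G1_def del_arc_def ..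
    also have "suppress_if_11 q G1 = G2" unfolding G2_def using suppress_if_11_eq[OF wf1 qV1 iq1 oq1] .
    also have "suppress_if_11 px G2 = G3" unfolding G3_def using suppress_if_11_eq[OF wf2 pxV2 ipx2 opx2] .
    finally show ?thesis .
  qed
  have fG3: "fst G3 = fst G - {q} - {px}" unfolding G3_def suppress_fst fG2 ..
  have deg: "\<forall>t\<in>fst G3. indeg G3 t = indeg G t \<and> outdeg G3 t = outdeg G t"
  proof
    fix t assume t: "t \<in> fst G3"
    hence tq: "t \<noteq> q" "t \<noteq> px" unfolding fG3 by blast+
    have d3: "indeg G3 t = indeg G2 t \<and> outdeg G3 t = outdeg G2 t"
      unfolding G3_def using suppress_deg[OF wf2 ipx2 opx2 tq(2) zx] .
    have d2: "indeg G2 t = indeg G1 t \<and> outdeg G2 t = outdeg G1 t"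
      unfolding G2_def using suppress_deg[OF wf1 iq1 oq1 tq(1) gy] .
    have "inn G1 t = inn G t" unfolding G1_def using del_arc_inn[of q px G t] tq by simp
    moreover have "outn G1 t = outn G t" unfolding G1_def using del_arc_outn[of q px G t] tq by simp
    ultimately show "indeg G3 t = indeg G t \<and> outdeg G3 t = outdeg G t"
      using d3 d2 unfolding indeg_inn outdeg_outn by simp
  qed
  have wf3: "wf_graph G3" unfolding G3_def using suppress_wf[OF wf2 ipx2 opx2 \<open>z \<noteq> px\<close> \<open>x \<noteq> px\<close>] .
  have ac1: "acyclic (snd G1)" using acyclic_subset[OF ac del_arc_sub[of q px G]] unfolding G1_def .
  have ac2: "acyclic (snd G2)" unfolding G2_def using suppress_acyclic[OF ac1 iq1 oq1] .
  have ac3: "acyclic (snd G3)" unfolding G3_def using suppress_acyclic[OF ac2 ipx2 opx2] .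
  have rt: "\<forall>r. is_root G r \<longrightarrow> r \<in> fst G3"
  proof (intro allI impI)
    fix r assume "is_root G r"
    hence "r \<in> fst G" "indeg G r = 0" unfolding is_root_def by auto
    hence "r \<noteq> q" "r \<noteq> px" "r \<in> fst G" using qd(1) pxd(1) by auto
    thus "r \<in> fst G3" unfolding fG3 by blast
  qed
  have sub: "fst G3 \<subseteq> fst G" unfolding fG3 by blast
  have nb: "network G3 \<and> binary G3" using net_pres[OF N B wf3 sub ac3 deg rt] .
  have lift: "\<exists>L. good G L" if gL: "good G3 L'" for L'
  proof -
    have yG: "y \<in> fst G3" unfolding fG3 using xV \<open>y \<noteq> q\<close> \<open>px \<noteq> y\<close> by blast
    have xG: "x \<in> fst G3" unfolding fG3 using xV \<open>x \<noteq> q\<close> \<open>x \<noteq> px\<close> by blast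
    have "indeg G3 y = indeg G y" using deg yG by blast
    hence y1: "indeg G3 y = 1" using ly unfolding is_leaf_def by simp
    have "indeg G3 x = indeg G x" using deg xG by blast
    hence x1: "indeg G3 x = 1" using lx unfolding is_leaf_def by simp
    have "(g,y) \<notin> L'"
    proof
      assume "(g,y) \<in> L'"
      hence "2 \<le> indeg G3 y" using gL unfolding good_def by blast
      thus False using y1 by simp
    qed
    moreover have "(z,x) \<notin> L'"
    proof
      assume "(z,x) \<in> L'"
      hence "2 \<le> indeg G3 x" using gL unfolding good_def by blast
      thus False using x1 by simp
    qed
    moreover have "L' \<subseteq> snd G3" using gL unfolding good_def by blast
    moreover have "snd G3 \<subseteq> snd G2 \<union> {(z,x)}" unfolding G3_def suppress_E[OF ipx2 opx2] by blast
    moreover have "snd G2 \<subseteq> snd G1 \<union> {(g,y)}" unfolding G2_def suppress_E[OF iq1 oq1] by blast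
    ultimately have "L' \<subseteq> snd G1" by blast
    hence s1: "L' \<subseteq> snd G" using del_arc_sub[of q px G] unfolding G1_def by blast
    have s2: "\<forall>v\<in>fst G - fst G3. v \<noteq> px \<longrightarrow> indeg G v < 2" unfolding fG3 using qd(1) by auto
    have s3: "snd G3 \<subseteq> fst G3 \<times> fst G3" using wf3 unfolding wf_graph_def by blast
    have q3: "q \<notin> fst G3" "px \<notin> fst G3" unfolding fG3 by blast+
    have "good G (insert (q,px) L')"
      by (rule lift2[OF sub s3 deg s2 gL s1 qpx q3]) (use pxd qd in auto)
    thus ?thesis by blast
  qed
  have "\<forall>L'. good G3 L' \<longrightarrow> (\<exists>L. good G L)" using lift by blast
  thus ?thesis using nb red by simp
qed




lemma red_step:
  assumes N: "network G" and B: "binary G"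
  shows "network (reduce_pair s G) \<and> binary (reduce_pair s G) \<and>
         (\<forall>L'. good (reduce_pair s G) L' \<longrightarrow> (\<exists>L. good G L))"
proof -
  obtain x y where s: "s = (x,y)" by (cases s) auto
  show ?thesis
  proof (cases "cherry G x y")
    case True
    then show ?thesis using cherry_red[OF N B True] s by simp
  next
    case False
    show ?thesis
    proof (cases "ret_cherry G x y")
      case True
      then show ?thesis using ret_red[OF N B True] s by simp
    next
      case F2: False
      have "reduce_pair s G = G" unfolding s reduce_pair_def using False F2 by simp
      thus ?thesis using N B by auto
    qed
  qed
qed

lemma tree_good:
  assumes N: "network G" and B: "binary G" and T: "is_tree G"
  shows "good G {}"
  unfolding good_def
proof (intro conjI allI impI ballI)
  fix v assume v: "v \<in> fst G" "2 \<le> indeg G v"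
  hence "is_reticulation G v" using in2[OF N B v(1)] unfolding is_reticulation_def by simp
  thus "\<exists>!u. (u, v) \<in> {}" using T unfolding is_tree_def by blast
qed auto

lemma seq_good:
  "\<forall>G. network G \<and> binary G \<and> is_tree (reduce_seq G S) \<longrightarrow> (\<exists>L. good G L)"
proof (induction S)
  case Nil
  then show ?case using tree_good unfolding reduce_seq_def by auto
next
  case (Cons s S)
  show ?case
  proof (intro allI impI)
    fix G assume a: "network G \<and> binary G \<and> is_tree (reduce_seq G (s # S))"
    have st: "network (reduce_pair s G) \<and> binary (reduce_pair s G) \<and>
         (\<forall>L'. good (reduce_pair s G) L' \<longrightarrow> (\<exists>L. good G L))" using red_step a by blast
    have "reduce_seq G (s # S) = reduce_seq (reduce_pair s G) S" unfolding reduce_seq_def by simp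
    hence "is_tree (reduce_seq (reduce_pair s G) S)" using a by simp
    hence "\<exists>L. good (reduce_pair s G) L" using Cons.IH st by blast
    thus "\<exists>L. good G L" using st by blast
  qed
qed

lemma orchard_good:
  assumes "network N" "binary N" "orchard N" shows "\<exists>L. good N L"
  using assms seq_good unfolding orchard_def by blast




lemma path_arcs_Nil[simp]: "path_arcs u [] w = {(u,w)}"
  unfolding path_arcs_def by simp
lemma path_arcs_Cons[simp]: "path_arcs u (p#ps) w = insert (u,p) (path_arcs p ps w)"
  unfolding path_arcs_def by simp
lemma path_arcs_mid: "path_arcs u (ps @ m # qs) w = path_arcs u ps m \<union> path_arcs m qs w"
proof (induction ps arbitrary: u)
  case Nil then show ?case by simp
next
  case (Cons a ps) then show ?case by simp
qed
lemma path_arcs_snoc: "path_arcs u (ps @ [p]) w = insert (p,w) (path_arcs u ps p)"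
  using path_arcs_mid[of u ps p "[]" w] by auto

lemma path_trancl: "path_arcs u ps w \<subseteq> E \<Longrightarrow> z \<in> set ps \<union> {w} \<Longrightarrow> (u,z) \<in> E\<^sup>+"
proof (induction ps arbitrary: u)
  case Nil then show ?case by auto
next
  case (Cons p ps)
  hence up: "(u,p) \<in> E" and r: "path_arcs p ps w \<subseteq> E" by auto
  show ?case
  proof (cases "z = p")
    case True then show ?thesis using up by auto
  next
    case False
    hence "z \<in> set ps \<union> {w}" using Cons.prems by auto
    hence "(p,z) \<in> E\<^sup>+" using Cons.IH r by blast
    thus ?thesis using up by (meson trancl_into_trancl2)
  qed
qed

lemma path_distinct: "acyclic E \<Longrightarrow> path_arcs u ps w \<subseteq> E \<Longrightarrow> distinct (u # ps @ [w])"
proof (induction ps arbitrary: u)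
  case Nil
  then show ?case using acyc_irrefl[of E u] by auto
next
  case (Cons p ps)
  hence r: "path_arcs p ps w \<subseteq> E" by auto
  have "u \<notin> set (p # ps @ [w])"
  proof
    assume "u \<in> set (p # ps @ [w])"
    hence "u \<in> set (p#ps) \<union> {w}" by auto
    hence "(u,u) \<in> E\<^sup>+" using path_trancl[OF Cons.prems(2)] by blast
    thus False using Cons.prems(1) unfolding acyclic_def by blast
  qed
  moreover have "distinct (p # ps @ [w])" using Cons.IH[OF Cons.prems(1) r] .
  ultimately show ?case by simp
qed

lemma path_map: "path_arcs (h u) (map h ps) (h w) = map_prod h h ` path_arcs u ps w"
proof (induction ps arbitrary: u)
  case Nil then show ?case by simp
next
  case (Cons a ps) then show ?case by simp
qed

lemma path_last: assumes "path_arcs u ps w \<subseteq> E" shows "\<exists>x. (x,w) \<in> E"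
proof (cases ps rule: rev_exhaust)
  case Nil
  then show ?thesis using assms by auto
next
  case (snoc ys y)
  then show ?thesis using assms path_arcs_snoc[of u ys y w] by blast
qed

definition gmap :: "('a \<Rightarrow> 'b) \<Rightarrow> 'a graph \<Rightarrow> 'b graph" where
  "gmap h G = (h ` fst G, map_prod h h ` snd G)"

lemma gmap_inn: "inj h \<Longrightarrow> inn (gmap h G) (h v) = h ` inn G v"
  unfolding inn_def gmap_def by (auto simp: inj_eq)
lemma gmap_outn: "inj h \<Longrightarrow> outn (gmap h G) (h v) = h ` outn G v"
  unfolding outn_def gmap_def by (auto simp: inj_eq)
lemma gmap_indeg: "inj h \<Longrightarrow> indeg (gmap h G) (h v) = indeg G v"
  unfolding indeg_inn using gmap_inn[of h G v] by (simp add: card_image inj_on_subset)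
lemma gmap_outdeg: "inj h \<Longrightarrow> outdeg (gmap h G) (h v) = outdeg G v"
  unfolding outdeg_outn using gmap_outn[of h G v] by (simp add: card_image inj_on_subset)
lemma gmap_mem: "inj h \<Longrightarrow> h v \<in> fst (gmap h G) \<longleftrightarrow> v \<in> fst G"
  unfolding gmap_def by (auto simp: inj_eq)

lemma gmap_trancl:
  assumes "inj h" "(a,b) \<in> (map_prod h h ` E)\<^sup>+"
  shows "\<exists>x y. a = h x \<and> b = h y \<and> (x,y) \<in> E\<^sup>+"
  using assms(2)
proof (induction rule: trancl_induct)
  case (base y)
  then show ?case by auto
next
  case (step y z)
  then obtain x y0 where xy: "a = h x" "y = h y0" "(x,y0) \<in> E\<^sup>+" by blast
  obtain y1 z1 where "(y1,z1) \<in> E" "(y,z) = (h y1, h z1)" using step(2) by auto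
  hence "y1 = y0" "z = h z1" using xy assms(1) by (auto simp: inj_eq)
  hence "(x,z1) \<in> E\<^sup>+" using xy \<open>(y1,z1) \<in> E\<close> by (meson trancl.trancl_into_trancl)
  thus ?case using xy \<open>z = h z1\<close> by blast
qed

lemma gmap_acyclic: "inj h \<Longrightarrow> acyclic E \<Longrightarrow> acyclic (map_prod h h ` E)"
proof -
  assume a: "inj h" "acyclic E"
  { fix z assume "(z,z) \<in> (map_prod h h ` E)\<^sup>+"
    then obtain x y where "z = h x" "z = h y" "(x,y) \<in> E\<^sup>+" using gmap_trancl[OF a(1)] by blast
    hence "(x,x) \<in> E\<^sup>+" using a(1) by (simp add: inj_eq)
    hence False using a(2) unfolding acyclic_def by blast }
  thus ?thesis unfolding acyclic_def by blast
qed

lemma gmap_network: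
  assumes h: "inj h" and N: "network G"
  shows "network (gmap h G)"
proof -
  have fin: "finite (fst (gmap h G))" using N unfolding network_def gmap_def by simp
  have sub: "snd (gmap h G) \<subseteq> fst (gmap h G) \<times> fst (gmap h G)" using N unfolding network_def gmap_def by auto
  have ac: "acyclic (snd (gmap h G))" using gmap_acyclic[OF h] N unfolding network_def gmap_def by simp
  obtain r where r: "is_root G r" "\<And>r'. is_root G r' \<Longrightarrow> r' = r" using N unfolding network_def by blast
  have ex: "\<exists>!r. is_root (gmap h G) r"
  proof
    show "is_root (gmap h G) (h r)" using r(1) gmap_indeg[OF h] gmap_outdeg[OF h] gmap_mem[OF h]
      unfolding is_root_def by simp
  next
    fix z assume z: "is_root (gmap h G) z"
    then obtain v where v: "z = h v" "v \<in> fst G" unfolding is_root_def gmap_def by auto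
    hence "is_root G v" using z gmap_indeg[OF h] gmap_outdeg[OF h] unfolding is_root_def by simp
    thus "z = h r" using r(2) v by simp
  qed
  have cl: "\<forall>z \<in> fst (gmap h G). is_root (gmap h G) z \<or> is_tree_node (gmap h G) z \<or> is_reticulation (gmap h G) z \<or> is_leaf (gmap h G) z"
  proof
    fix z assume z: "z \<in> fst (gmap h G)"
    then obtain v where v: "z = h v" "v \<in> fst G" unfolding gmap_def by auto
    have "\<forall>v\<in>fst G. is_root G v \<or> is_tree_node G v \<or> is_reticulation G v \<or> is_leaf G v"
      using N unfolding network_def by blast
    hence "is_root G v \<or> is_tree_node G v \<or> is_reticulation G v \<or> is_leaf G v" using v by blast
    thus "is_root (gmap h G) z \<or> is_tree_node (gmap h G) z \<or> is_reticulation (gmap h G) z \<or> is_leaf (gmap h G) z"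
      using v z gmap_indeg[OF h, of G v] gmap_outdeg[OF h, of G v]
      unfolding is_root_def is_tree_node_def is_reticulation_def is_leaf_def by auto
  qed
  show ?thesis unfolding network_def using fin sub ac ex cl by blast
qed

lemma gmap_binary:
  assumes h: "inj h" and B: "binary G"
  shows "binary (gmap h G)"
  unfolding binary_def
proof (intro ballI conjI impI)
  fix z assume z: "z \<in> fst (gmap h G)"
  then obtain v where v: "z = h v" "v \<in> fst G" unfolding gmap_def by auto
  note d = gmap_indeg[OF h, of G v] gmap_outdeg[OF h, of G v]
  have b: "is_tree_node G v \<longrightarrow> indeg G v + outdeg G v = 3" "is_reticulation G v \<longrightarrow> indeg G v + outdeg G v = 3"
    using B v unfolding binary_def by blast+
  { assume "is_tree_node (gmap h G) z" hence "is_tree_node G v" using v d unfolding is_tree_node_def by simp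
    thus "indeg (gmap h G) z + outdeg (gmap h G) z = 3" using b d v by simp }
  { assume "is_reticulation (gmap h G) z" hence "is_reticulation G v" using v d unfolding is_reticulation_def by simp
    thus "indeg (gmap h G) z + outdeg (gmap h G) z = 3" using b d v by simp }
qed

lemma gmap_no_ret:
  assumes h: "inj h" and T: "\<forall>v. \<not> is_reticulation G v"
  shows "\<forall>z. \<not> is_reticulation (gmap h G) z"
proof (intro allI notI)
  fix z assume z: "is_reticulation (gmap h G) z"
  then obtain v where v: "z = h v" "v \<in> fst G" unfolding is_reticulation_def gmap_def by auto
  hence "is_reticulation G v" using z gmap_indeg[OF h, of G v] gmap_outdeg[OF h, of G v]
    unfolding is_reticulation_def by simp
  thus False using T by blast
qed

lemma gmap_leaves:
  assumes h: "inj h"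
  shows "leaves (gmap h G) = h ` leaves G"
proof
  show "leaves (gmap h G) \<subseteq> h ` leaves G"
  proof
    fix z assume z: "z \<in> leaves (gmap h G)"
    then obtain v where v: "z = h v" "v \<in> fst G" unfolding leaves_def gmap_def by auto
    hence "is_leaf G v" using z gmap_indeg[OF h, of G v] gmap_outdeg[OF h, of G v]
      unfolding leaves_def is_leaf_def by simp
    thus "z \<in> h ` leaves G" using v unfolding leaves_def by auto
  qed
next
  show "h ` leaves G \<subseteq> leaves (gmap h G)"
  proof
    fix z assume "z \<in> h ` leaves G"
    then obtain v where v: "z = h v" "is_leaf G v" unfolding leaves_def by auto
    hence "is_leaf (gmap h G) z" using gmap_indeg[OF h, of G v] gmap_outdeg[OF h, of G v] gmap_mem[OF h, of v G]
      unfolding is_leaf_def by simp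
    thus "z \<in> leaves (gmap h G)" unfolding leaves_def is_leaf_def by simp
  qed
qed




locale goodnet =
  fixes N :: "'v graph" and L :: "('v \<times> 'v) set"
  assumes N: "network N" and B: "binary N" and G: "good N L"
begin

definition E where "E = snd N - L"
definition A where "A = Field L"
definition r where "r = (THE r. is_root N r)"

lemma wfN: "wf_graph N" using network_wf[OF N] .
lemma finV: "finite (fst N)" using wfN unfolding wf_graph_def by blast
lemma E0V: "snd N \<subseteq> fst N \<times> fst N" using wfN unfolding wf_graph_def by blast
lemma ac0: "acyclic (snd N)" using net_acyclic[OF N] .
lemma LE: "L \<subseteq> snd N" using G unfolding good_def by blast
lemma Lprops: "(u,v) \<in> L \<Longrightarrow> indeg N v \<ge> 2 \<and> outdeg N u \<ge> 2 \<and> (\<forall>w. (u,w) \<in> L \<longrightarrow> w = v)"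
  using G unfolding good_def by blast
lemma Luniq: "v \<in> fst N \<Longrightarrow> indeg N v \<ge> 2 \<Longrightarrow> \<exists>!u. (u,v) \<in> L"
  using G unfolding good_def by blast
lemma EV: "E \<subseteq> fst N \<times> fst N" unfolding E_def using E0V by blast
lemma ES: "E \<subseteq> snd N" unfolding E_def by blast
lemma acE: "acyclic E" using acyclic_subset[OF ac0 ES] .
lemma finE: "finite E" using finite_subset[OF ES wf_graph_fin_E[OF wfN]] .
lemma root_ex: "\<exists>!r. is_root N r" using N unfolding network_def by blast
lemma root: "is_root N r" unfolding r_def using theI'[OF root_ex] .
lemma root_uniq: "is_root N v \<Longrightarrow> v = r" using root root_ex by blast
lemma rV: "r \<in> fst N" using root unfolding is_root_def by simp
lemma inn_r: "inn N r = {}"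
  using root fin_inn[OF wfN, of r] unfolding is_root_def indeg_inn by simp
lemma r_noparent: "(u,r) \<notin> snd N" using inn_r unfolding inn_def by auto
lemma AV: "A \<subseteq> fst N" unfolding A_def Field_def using LE E0V by blast

lemma ret_A: "v \<in> fst N \<Longrightarrow> indeg N v \<ge> 2 \<Longrightarrow> v \<in> A"
proof -
  assume "v \<in> fst N" "indeg N v \<ge> 2"
  then obtain u where "(u,v) \<in> L" using Luniq[of v] by blast
  thus ?thesis unfolding A_def Field_def by blast
qed

lemma r_notA: "r \<notin> A"
proof
  assume "r \<in> A"
  then obtain w where "(w,r) \<in> L \<or> (r,w) \<in> L" unfolding A_def Field_def by blast
  hence "indeg N r \<ge> 2 \<or> outdeg N r \<ge> 2" using Lprops[of w r] Lprops[of r w] by blast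
  thus False using root unfolding is_root_def by simp
qed

lemma par_unique: 
  assumes "(u,v) \<in> E" "(u',v) \<in> E" shows "u = u'"
proof (rule ccontr)
  assume ne: "u \<noteq> u'"
  have vV: "v \<in> fst N" using assms EV by blast
  have ui: "u \<in> inn N v" "u' \<in> inn N v" using assms ES unfolding inn_def by auto
  have "indeg N v \<ge> 2" unfolding indeg_inn using card_ge2[OF fin_inn[OF wfN] ui ne] .
  hence i2: "indeg N v = 2" using in2[OF N B vV] by simp
  obtain w where w: "(w,v) \<in> L" using Luniq[OF vV] \<open>indeg N v \<ge> 2\<close> by blast
  have "w \<in> inn N v" using w LE unfolding inn_def by auto
  moreover have "inn N v = {u,u'}" using card2_eq[OF fin_inn[OF wfN] _ ui ne] i2 unfolding indeg_inn by simp
  ultimately have "w = u \<or> w = u'" by blast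
  thus False using w assms unfolding E_def by blast
qed

lemma par_exists:
  assumes "v \<in> fst N" "v \<noteq> r" shows "\<exists>u. (u,v) \<in> E"
proof -
  have "indeg N v \<noteq> 0"
  proof
    assume "indeg N v = 0"
    hence "is_root N v" using network_class[OF N B assms(1)] assms(1) unfolding is_root_def by auto
    thus False using root_uniq assms(2) by blast
  qed
  then obtain u where u: "u \<in> inn N v" unfolding indeg_inn by fastforce
  show ?thesis
  proof (cases "(u,v) \<in> L")
    case False
    then show ?thesis using u unfolding inn_def E_def by auto
  next
    case True
    hence "indeg N v \<ge> 2" using Lprops[of u v] by blast
    hence "indeg N v = 2" using in2[OF N B assms(1)] by simp
    then obtain a b where ab: "inn N v = {a,b}" "a \<noteq> b" unfolding indeg_inn card_2_iff by blast
    then obtain u' where u': "u' \<in> inn N v" "u' \<noteq> u" using u by blast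
    have "(u',v) \<notin> L"
    proof
      assume "(u',v) \<in> L"
      thus False using Luniq[OF assms(1) \<open>indeg N v \<ge> 2\<close>] True u'(2) by blast
    qed
    thus ?thesis using u' unfolding inn_def E_def by auto
  qed
qed

lemma A_notr: "a \<in> A \<Longrightarrow> a \<noteq> r" using r_notA by blast

lemma A_child:
  assumes "a \<in> A"
  shows "\<exists>w. (a,w) \<in> E" "(a,w) \<in> E \<Longrightarrow> (a,w') \<in> E \<Longrightarrow> w = w'"
proof -
  have aV: "a \<in> fst N" using assms AV by blast
  have "(\<exists>u. (u,a) \<in> L) \<or> (\<exists>v. (a,v) \<in> L)" using assms unfolding A_def Field_def by blast
  hence "(\<exists>w. (a,w) \<in> E) \<and> ((a,w) \<in> E \<longrightarrow> (a,w') \<in> E \<longrightarrow> w = w')"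
  proof
    assume "\<exists>u. (u,a) \<in> L"
    then obtain u where "(u,a) \<in> L" by blast
    hence "indeg N a \<ge> 2" using Lprops[of u a] by blast
    hence o1: "outdeg N a = 1" using in2[OF N B aV] by simp
    then obtain w0 where w0: "outn N a = {w0}" using outn_ex1[of N a] by blast
    have "(a,w0) \<notin> L"
    proof
      assume "(a,w0) \<in> L"
      hence "outdeg N a \<ge> 2" using Lprops[of a w0] by blast
      thus False using o1 by simp
    qed
    hence "(a,w0) \<in> E" using w0 unfolding outn_def E_def by auto
    moreover have "(a,w) \<in> E \<longrightarrow> (a,w') \<in> E \<longrightarrow> w = w'"
    proof (intro impI)
      assume "(a,w) \<in> E" "(a,w') \<in> E"
      hence "w \<in> outn N a" "w' \<in> outn N a" using ES unfolding outn_def by auto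
      thus "w = w'" using w0 by simp
    qed
    ultimately show ?thesis by blast
  next
    assume "\<exists>v. (a,v) \<in> L"
    then obtain v where av: "(a,v) \<in> L" by blast
    hence "outdeg N a \<ge> 2" using Lprops[of a v] by blast
    hence o2: "outdeg N a = 2" using out2[OF N B aV] by simp
    then obtain x y where xy: "outn N a = {x,y}" "x \<noteq> y" unfolding outdeg_outn card_2_iff by blast
    have vin: "v \<in> outn N a" using av LE unfolding outn_def by auto
    have "v = x \<or> v = y" using xy(1) vin by blast
    then obtain w0 where w0: "outn N a = {v,w0}" "w0 \<noteq> v"
    proof
      assume "v = x" thus ?thesis using that[of y] xy by simp
    next
      assume "v = y" thus ?thesis using that[of x] xy by (simp add: insert_commute)
    qed
    have nl: "(a,w0) \<notin> L" using Lprops[OF av] w0(2) by blast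
    hence "(a,w0) \<in> E" using w0 unfolding outn_def E_def by auto
    moreover have "(a,w) \<in> E \<longrightarrow> (a,w') \<in> E \<longrightarrow> w = w'"
    proof (intro impI)
      assume "(a,w) \<in> E" "(a,w') \<in> E"
      hence "w \<in> outn N a" "w' \<in> outn N a" "w \<noteq> v" "w' \<noteq> v" using ES av unfolding outn_def E_def by auto
      thus "w = w'" using w0 by auto
    qed
    ultimately show ?thesis by blast
  qed
  thus "\<exists>w. (a,w) \<in> E" "(a,w) \<in> E \<Longrightarrow> (a,w') \<in> E \<Longrightarrow> w = w'" by blast+
qed

lemma nonA_E_in: "v \<notin> A \<Longrightarrow> (u,v) \<in> E \<longleftrightarrow> (u,v) \<in> snd N"
  unfolding E_def A_def Field_def by blast
lemma nonA_E_out: "v \<notin> A \<Longrightarrow> (v,w) \<in> E \<longleftrightarrow> (v,w) \<in> snd N"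
  unfolding E_def A_def Field_def by blast

lemma wfE: "wf E" using finite_acyclic_wf[OF finE acE] .
lemma wfE': "wf (E\<inverse>)" using finite_acyclic_wf_converse[OF finE acE] .

lemma BE: "v \<in> fst N \<Longrightarrow> v \<noteq> r \<Longrightarrow> \<exists>c ps. c \<in> fst N \<and> c \<notin> A \<and> set ps \<subseteq> A \<and> path_arcs c ps v \<subseteq> E"
proof (induction v rule: wf_induct_rule[OF wfE])
  case (1 v)
  obtain u where u: "(u,v) \<in> E" using par_exists[OF "1.prems"] by blast
  have uV: "u \<in> fst N" using u EV by blast
  show ?case
  proof (cases "u \<in> A")
    case False
    then show ?thesis using u uV by (intro exI[of _ u] exI[of _ "[]"]) simp
  next
    case True
    then obtain c ps where cps: "c \<in> fst N" "c \<notin> A" "set ps \<subseteq> A" "path_arcs c ps u \<subseteq> E"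
      using "1.IH"[OF u uV A_notr[OF True]] by blast
    show ?thesis using cps True u path_arcs_snoc[of c ps u v]
      by (intro exI[of _ c] exI[of _ "ps @ [u]"]) auto
  qed
qed

lemma FE: "a \<in> A \<Longrightarrow> \<exists>qs b. b \<in> fst N \<and> b \<notin> A \<and> set qs \<subseteq> A \<and> path_arcs a qs b \<subseteq> E"
proof (induction a rule: wf_induct_rule[OF wfE'])
  case (1 a)
  obtain w where w: "(a,w) \<in> E" using A_child(1)[OF "1.prems"] by blast
  have wV: "w \<in> fst N" using w EV by blast
  show ?case
  proof (cases "w \<in> A")
    case False
    then show ?thesis using w wV by (intro exI[of _ "[]"] exI[of _ w]) simp
  next
    case True
    have "(w,a) \<in> E\<inverse>" using w by simp
    then obtain qs b where qb: "b \<in> fst N" "b \<notin> A" "set qs \<subseteq> A" "path_arcs w qs b \<subseteq> E"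
      using "1.IH" True by blast
    show ?thesis using qb True w
      by (intro exI[of _ "w # qs"] exI[of _ b]) auto
  qed
qed

lemma BU:
  "path_arcs c ps v \<subseteq> E \<Longrightarrow> path_arcs c' ps' v \<subseteq> E \<Longrightarrow> c \<notin> A \<Longrightarrow> c' \<notin> A \<Longrightarrow> set ps \<subseteq> A \<Longrightarrow> set ps' \<subseteq> A
   \<Longrightarrow> c = c' \<and> ps = ps'"
proof (induction ps arbitrary: v ps' rule: rev_induct)
  case Nil
  hence cv: "(c,v) \<in> E" by simp
  show ?case
  proof (cases ps' rule: rev_exhaust)
    case Nil
    then show ?thesis using cv \<open>path_arcs c' ps' v \<subseteq> E\<close> par_unique by auto
  next
    case (snoc ys y)
    hence "(y,v) \<in> E" "y \<in> A" using \<open>path_arcs c' ps' v \<subseteq> E\<close> \<open>set ps' \<subseteq> A\<close> path_arcs_snoc[of c' ys y v] by auto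
    hence "y = c" using par_unique cv by blast
    thus ?thesis using \<open>y \<in> A\<close> \<open>c \<notin> A\<close> by simp
  qed
next
  case (snoc x xs)
  hence xv: "(x,v) \<in> E" and px: "path_arcs c xs x \<subseteq> E" and xA: "x \<in> A" "set xs \<subseteq> A"
    using path_arcs_snoc[of c xs x v] by auto
  show ?case
  proof (cases ps' rule: rev_exhaust)
    case Nil
    hence "(c',v) \<in> E" using snoc.prems by simp
    hence "c' = x" using par_unique xv by blast
    thus ?thesis using xA snoc.prems by simp
  next
    case (snoc ys y)
    hence yv: "(y,v) \<in> E" and py: "path_arcs c' ys y \<subseteq> E" and yA: "set ys \<subseteq> A"
      using snoc.prems path_arcs_snoc[of c' ys y v] by auto
    have "y = x" using par_unique xv yv by blast
    hence "c = c' \<and> xs = ys" using snoc.IH[OF px] py yA xA snoc.prems by blast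
    thus ?thesis using \<open>y = x\<close> snoc by simp
  qed
qed

lemma FU:
  "a \<in> A \<Longrightarrow> path_arcs a qs b \<subseteq> E \<Longrightarrow> path_arcs a qs' b' \<subseteq> E \<Longrightarrow> set qs \<subseteq> A \<Longrightarrow> set qs' \<subseteq> A
   \<Longrightarrow> b \<notin> A \<Longrightarrow> b' \<notin> A \<Longrightarrow> qs = qs' \<and> b = b'"
proof (induction qs arbitrary: a qs')
  case Nil
  hence ab: "(a,b) \<in> E" by simp
  show ?case
  proof (cases qs')
    case Nil
    then show ?thesis using ab A_child(2)[OF \<open>a \<in> A\<close>] \<open>path_arcs a qs' b' \<subseteq> E\<close> by auto
  next
    case (Cons q qs0)
    hence "(a,q) \<in> E" "q \<in> A" using Nil.prems by auto
    hence "q = b" using A_child(2)[OF \<open>a \<in> A\<close>] ab by blast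
    thus ?thesis using \<open>q \<in> A\<close> \<open>b \<notin> A\<close> by simp
  qed
next
  case (Cons q qs0)
  hence aq: "(a,q) \<in> E" and pq: "path_arcs q qs0 b \<subseteq> E" and qA: "q \<in> A" "set qs0 \<subseteq> A" by auto
  show ?case
  proof (cases qs')
    case Nil
    hence "(a,b') \<in> E" using Cons.prems by simp
    hence "b' = q" using A_child(2)[OF \<open>a \<in> A\<close>] aq by blast
    thus ?thesis using qA Cons.prems by simp
  next
    case (Cons q' qs1)
    hence "(a,q') \<in> E" and pq': "path_arcs q' qs1 b' \<subseteq> E" and "set qs1 \<subseteq> A"
      using Cons.prems(3,5) local.Cons by auto
    hence "q' = q" using A_child(2)[OF \<open>a \<in> A\<close>] aq by blast
    hence "qs0 = qs1 \<and> b = b'" using Cons.IH[OF qA(1) pq] pq' \<open>set qs1 \<subseteq> A\<close> qA Cons.prems by blast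
    thus ?thesis using \<open>q' = q\<close> local.Cons by simp
  qed
qed

end



context goodnet begin

definition Tarc where
  "Tarc = {(c,b). c \<in> fst N \<and> c \<notin> A \<and> b \<in> fst N \<and> b \<notin> A \<and> (\<exists>ps. set ps \<subseteq> A \<and> path_arcs c ps b \<subseteq> E)}"
definition Pp where
  "Pp e = (SOME ps. set ps \<subseteq> A \<and> path_arcs (fst e) ps (snd e) \<subseteq> E)"

lemma Tarc_intro:
  "c \<in> fst N \<Longrightarrow> c \<notin> A \<Longrightarrow> b \<in> fst N \<Longrightarrow> b \<notin> A \<Longrightarrow> set ps \<subseteq> A \<Longrightarrow> path_arcs c ps b \<subseteq> E \<Longrightarrow> (c,b) \<in> Tarc"
  unfolding Tarc_def by blast

lemma Tarc_D: "(c,b) \<in> Tarc \<Longrightarrow> c \<in> fst N \<and> c \<notin> A \<and> b \<in> fst N \<and> b \<notin> A"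
  unfolding Tarc_def by blast

lemma P_prop: assumes "(c,b) \<in> Tarc" shows "set (Pp (c,b)) \<subseteq> A \<and> path_arcs c (Pp (c,b)) b \<subseteq> E"
proof -
  have "\<exists>ps. set ps \<subseteq> A \<and> path_arcs c ps b \<subseteq> E" using assms unfolding Tarc_def by blast
  from someI_ex[OF this] show ?thesis unfolding Pp_def by simp
qed

lemma P_eq:
  assumes "c \<notin> A" "set ps \<subseteq> A" "path_arcs c ps b \<subseteq> E" shows "Pp (c,b) = ps"
proof -
  have "\<exists>ps. set ps \<subseteq> A \<and> path_arcs c ps b \<subseteq> E" using assms by blast
  from someI_ex[OF this] have "set (Pp (c,b)) \<subseteq> A \<and> path_arcs c (Pp (c,b)) b \<subseteq> E" unfolding Pp_def by simp
  thus ?thesis using BU[OF _ assms(3) assms(1) assms(1) _ assms(2)] by blast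
qed

lemma C4: "e \<in> Tarc \<Longrightarrow> distinct (Pp e) \<and> set (Pp e) \<subseteq> A"
proof -
  assume e: "e \<in> Tarc"
  obtain c b where cb: "e = (c,b)" by (cases e)
  have "set (Pp (c,b)) \<subseteq> A \<and> path_arcs c (Pp (c,b)) b \<subseteq> E" using P_prop e cb by blast
  moreover have "distinct (c # Pp (c,b) @ [b])" using path_distinct[OF acE] calculation by blast
  ultimately show ?thesis using cb by simp
qed

lemma C1: "(\<Union>e\<in>Tarc. set (Pp e)) = A"
proof
  show "(\<Union>e\<in>Tarc. set (Pp e)) \<subseteq> A" using C4 by blast
next
  show "A \<subseteq> (\<Union>e\<in>Tarc. set (Pp e))"
  proof
    fix a assume a: "a \<in> A"
    have aV: "a \<in> fst N" using a AV by blast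
    obtain c ps where c: "c \<in> fst N" "c \<notin> A" "set ps \<subseteq> A" "path_arcs c ps a \<subseteq> E"
      using BE[OF aV A_notr[OF a]] by blast
    obtain qs b where b: "b \<in> fst N" "b \<notin> A" "set qs \<subseteq> A" "path_arcs a qs b \<subseteq> E"
      using FE[OF a] by blast
    have p: "path_arcs c (ps @ a # qs) b \<subseteq> E" using path_arcs_mid[of c ps a qs b] c(4) b(4) by blast
    have s: "set (ps @ a # qs) \<subseteq> A" using c(3) b(3) a by auto
    have "(c,b) \<in> Tarc" using Tarc_intro[OF c(1,2) b(1,2) s p] .
    moreover have "Pp (c,b) = ps @ a # qs" using P_eq[OF c(2) s p] .
    ultimately show "a \<in> (\<Union>e\<in>Tarc. set (Pp e))" by force
  qed
qed

lemma up_arc: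
  assumes uv: "(u,v) \<in> E"
  shows "\<exists>c ps. c \<in> fst N \<and> c \<notin> A \<and> set ps \<subseteq> A \<and> path_arcs c ps v \<subseteq> E \<and> (u,v) \<in> path_arcs c ps v"
proof -
  have uV: "u \<in> fst N" using uv EV by auto
  show ?thesis
  proof (cases "u \<in> A")
    case False
    thus ?thesis using uV uv by (intro exI[of _ u] exI[of _ "[]"]) simp
  next
    case True
    obtain c ps where cp: "c \<in> fst N" "c \<notin> A" "set ps \<subseteq> A" "path_arcs c ps u \<subseteq> E"
      using BE[OF uV A_notr[OF True]] by blast
    have "path_arcs c (ps @ [u]) v = insert (u,v) (path_arcs c ps u)" using path_arcs_snoc .
    thus ?thesis using cp True uv by (intro exI[of _ c] exI[of _ "ps @ [u]"]) auto
  qed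
qed

lemma C2: "(\<Union>e\<in>Tarc. path_arcs (fst e) (Pp e) (snd e)) = E"
proof
  show "(\<Union>e\<in>Tarc. path_arcs (fst e) (Pp e) (snd e)) \<subseteq> E"
  proof
    fix z assume "z \<in> (\<Union>e\<in>Tarc. path_arcs (fst e) (Pp e) (snd e))"
    then obtain c b where cb: "(c,b) \<in> Tarc" "z \<in> path_arcs c (Pp (c,b)) b" by force
    thus "z \<in> E" using P_prop[OF cb(1)] by blast
  qed
next
  show "E \<subseteq> (\<Union>e\<in>Tarc. path_arcs (fst e) (Pp e) (snd e))"
  proof
    fix z assume z: "z \<in> E"
    obtain u v where uv: "z = (u,v)" by (cases z)
    have uvE: "(u,v) \<in> E" using z uv by simp
    have vV: "v \<in> fst N" using uvE EV by auto
    obtain c ps where c: "c \<in> fst N" "c \<notin> A" "set ps \<subseteq> A" "path_arcs c ps v \<subseteq> E"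
       "(u,v) \<in> path_arcs c ps v" using up_arc[OF uvE] by blast
    show "z \<in> (\<Union>e\<in>Tarc. path_arcs (fst e) (Pp e) (snd e))"
    proof (cases "v \<in> A")
      case False
      have "(c,v) \<in> Tarc" using Tarc_intro[OF c(1,2) vV False c(3,4)] .
      moreover have "Pp (c,v) = ps" using P_eq[OF c(2,3,4)] .
      ultimately show ?thesis using c(5) uv by force
    next
      case True
      obtain qs b where b: "b \<in> fst N" "b \<notin> A" "set qs \<subseteq> A" "path_arcs v qs b \<subseteq> E"
        using FE[OF True] by blast
      have eq: "path_arcs c (ps @ v # qs) b = path_arcs c ps v \<union> path_arcs v qs b" using path_arcs_mid .
      have p: "path_arcs c (ps @ v # qs) b \<subseteq> E" using eq c(4) b(4) by blast
      have s: "set (ps @ v # qs) \<subseteq> A" using c(3) b(3) True by auto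
      have "(c,b) \<in> Tarc" using Tarc_intro[OF c(1,2) b(1,2) s p] .
      moreover have "Pp (c,b) = ps @ v # qs" using P_eq[OF c(2) s p] .
      moreover have "(u,v) \<in> path_arcs c (ps @ v # qs) b" using eq c(5) by blast
      ultimately show ?thesis using uv by force
    qed
  qed
qed

lemma C3:
  assumes e: "e \<in> Tarc" "e' \<in> Tarc" "e \<noteq> e'"
  shows "set (Pp e) \<inter> set (Pp e') = {}"
proof (rule ccontr)
  assume "set (Pp e) \<inter> set (Pp e') \<noteq> {}"
  then obtain a where a: "a \<in> set (Pp e)" "a \<in> set (Pp e')" by blast
  obtain c b where cb: "e = (c,b)" by (cases e)
  obtain c' b' where cb': "e' = (c',b')" by (cases e')
  have P1: "set (Pp (c,b)) \<subseteq> A" "path_arcs c (Pp (c,b)) b \<subseteq> E" using P_prop e(1) cb by blast+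
  have P2: "set (Pp (c',b')) \<subseteq> A" "path_arcs c' (Pp (c',b')) b' \<subseteq> E" using P_prop e(2) cb' by blast+
  obtain xs ys where xy: "Pp (c,b) = xs @ a # ys" using a(1) cb split_list by metis
  obtain xs' ys' where xy': "Pp (c',b') = xs' @ a # ys'" using a(2) cb' split_list by metis
  have aA: "a \<in> A" using a(1) cb P1(1) by blast
  have q1: "path_arcs a ys b \<subseteq> E" using P1(2) xy path_arcs_mid[of c xs a ys b] by simp
  have q2: "path_arcs a ys' b' \<subseteq> E" using P2(2) xy' path_arcs_mid[of c' xs' a ys' b'] by simp
  have s1: "set ys \<subseteq> A" using P1(1) xy by simp
  have s2: "set ys' \<subseteq> A" using P2(1) xy' by simp
  have "b \<notin> A" "b' \<notin> A" "c \<notin> A" "c' \<notin> A" using Tarc_D e cb cb' by blast+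
  hence "b = b'" using FU[OF aA q1 q2 s1 s2] by blast
  hence "c = c'" using BU[OF P1(2) _ \<open>c \<notin> A\<close> \<open>c' \<notin> A\<close> P1(1) P2(1)] P2(2) by blast
  thus False using \<open>b = b'\<close> e(3) cb cb' by simp
qed

end



context goodnet begin

definition T0 where "T0 = (fst N - A, Tarc)"

lemma T0_fst: "fst T0 = fst N - A" unfolding T0_def by simp
lemma T0_snd: "snd T0 = Tarc" unfolding T0_def by simp

lemma T0_wf: "wf_graph T0"
proof -
  have "Tarc \<subseteq> (fst N - A) \<times> (fst N - A)"
  proof
    fix e assume "e \<in> Tarc"
    moreover obtain c b where "e = (c,b)" by (cases e)
    ultimately show "e \<in> (fst N - A) \<times> (fst N - A)" using Tarc_D[of c b] by auto
  qed
  thus ?thesis unfolding wf_graph_def T0_def using finV by auto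
qed

lemma A_deg: "a \<in> A \<Longrightarrow> indeg N a \<ge> 2 \<or> outdeg N a \<ge> 2"
proof -
  assume "a \<in> A"
  then obtain w where "(w,a) \<in> L \<or> (a,w) \<in> L" unfolding A_def Field_def by blast
  thus ?thesis using Lprops[of w a] Lprops[of a w] by blast
qed

lemma T0_inn_r: "inn T0 r = {}"
proof -
  { fix c assume "(c,r) \<in> Tarc"
    hence "path_arcs c (Pp (c,r)) r \<subseteq> E" using P_prop[of c r] by blast
    then obtain x where "(x,r) \<in> E" using path_last[of c "Pp (c,r)" r E] by blast
    hence False using ES r_noparent[of x] by blast }
  thus ?thesis unfolding inn_def T0_snd by blast
qed

lemma indeg_nonA: assumes "b \<in> fst N" "b \<notin> A" "b \<noteq> r" shows "indeg N b = 1"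
proof -
  have "indeg N b \<noteq> 0"
  proof
    assume "indeg N b = 0"
    hence "is_root N b" using network_class[OF N B assms(1)] assms(1) unfolding is_root_def by auto
    thus False using root_uniq[of b] assms(3) by blast
  qed
  moreover have "\<not> indeg N b \<ge> 2" using ret_A[of b] assms(1,2) by blast
  ultimately show ?thesis by simp
qed

lemma T0_indeg: assumes "b \<in> fst T0" shows "indeg T0 b = indeg N b"
proof (cases "b = r")
  case True
  then show ?thesis using T0_inn_r root unfolding indeg_inn is_root_def by simp
next
  case False
  have bV: "b \<in> fst N" "b \<notin> A" using assms T0_fst by auto
  obtain c ps where c: "c \<in> fst N" "c \<notin> A" "set ps \<subseteq> A" "path_arcs c ps b \<subseteq> E"
    using BE[OF bV(1) False] by blast
  have cT: "(c,b) \<in> Tarc" using Tarc_intro[OF c(1,2) bV c(3,4)] .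
  have "inn T0 b = {c}"
  proof -
    { fix c' assume c': "(c',b) \<in> Tarc"
      have "set (Pp (c',b)) \<subseteq> A" "path_arcs c' (Pp (c',b)) b \<subseteq> E" using P_prop[OF c'] by blast+
      moreover have "c' \<notin> A" using Tarc_D[OF c'] by blast
      ultimately have "c' = c" using BU[OF c(4) _ c(2) _ c(3), of c' "Pp (c',b)"] by blast }
    thus ?thesis using cT unfolding inn_def T0_snd by blast
  qed
  thus ?thesis using indeg_nonA[OF bV False] unfolding indeg_inn by simp
qed

lemma T0_outdeg: assumes "c \<in> fst T0" shows "outdeg T0 c = outdeg N c"
proof -
  have cV: "c \<in> fst N" "c \<notin> A" using assms T0_fst by auto
  define phi where "phi b = hd (Pp (c,b) @ [b])" for b
  have PT: "set (Pp (c,b)) \<subseteq> A \<and> path_arcs c (Pp (c,b)) b \<subseteq> E" if "b \<in> outn T0 c" for b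
    using P_prop that unfolding outn_def T0_snd by blast
  have bnA: "b \<notin> A" if "b \<in> outn T0 c" for b using that Tarc_D unfolding outn_def T0_snd by blast
  have ph_cases: "(Pp (c,b) = [] \<and> phi b = b) \<or> (\<exists>qs. Pp (c,b) = phi b # qs)" for b
    unfolding phi_def by (cases "Pp (c,b)") auto
  have img: "phi ` outn T0 c = outn N c"
  proof
    show "phi ` outn T0 c \<subseteq> outn N c"
    proof
      fix w assume "w \<in> phi ` outn T0 c"
      then obtain b where b: "b \<in> outn T0 c" "w = phi b" by blast
      have "(c, w) \<in> E" using ph_cases[of b] PT[OF b(1)] b(2) by auto
      thus "w \<in> outn N c" using ES unfolding outn_def by blast
    qed
  next
    show "outn N c \<subseteq> phi ` outn T0 c"
    proof
      fix w assume "w \<in> outn N c"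
      hence cw: "(c,w) \<in> E" using nonA_E_out[OF cV(2)] unfolding outn_def by simp
      have wV: "w \<in> fst N" using cw EV by blast
      show "w \<in> phi ` outn T0 c"
      proof (cases "w \<in> A")
        case False
        have "(c,w) \<in> Tarc" using Tarc_intro[OF cV wV False, of "[]"] cw by simp
        moreover have "Pp (c,w) = []" using P_eq[OF cV(2), of "[]" w] cw by simp
        ultimately show ?thesis unfolding phi_def outn_def T0_snd by force
      next
        case True
        obtain qs b where b: "b \<in> fst N" "b \<notin> A" "set qs \<subseteq> A" "path_arcs w qs b \<subseteq> E"
          using FE[OF True] by blast
        have p: "path_arcs c (w # qs) b \<subseteq> E" using cw b(4) by simp
        have s: "set (w # qs) \<subseteq> A" using True b(3) by simp
        have "(c,b) \<in> Tarc" using Tarc_intro[OF cV b(1,2) s p] .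
        moreover have "Pp (c,b) = w # qs" using P_eq[OF cV(2) s p] .
        ultimately show ?thesis unfolding phi_def outn_def T0_snd by force
      qed
    qed
  qed
  have inj: "inj_on phi (outn T0 c)"
  proof
    fix b1 b2 assume b: "b1 \<in> outn T0 c" "b2 \<in> outn T0 c" "phi b1 = phi b2"
    note P1 = PT[OF b(1)] and P2 = PT[OF b(2)]
    have nA: "b1 \<notin> A" "b2 \<notin> A" using bnA b by auto
    show "b1 = b2"
    proof (cases "Pp (c,b1)")
      case Nil
      hence "phi b1 = b1" unfolding phi_def by simp
      show ?thesis
      proof (cases "Pp (c,b2)")
        case Nil
        then show ?thesis using b(3) \<open>phi b1 = b1\<close> unfolding phi_def by simp
      next
        case (Cons q qs)
        hence "phi b2 = q" "q \<in> A" using P2 unfolding phi_def by auto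
        thus ?thesis using b(3) \<open>phi b1 = b1\<close> nA by simp
      qed
    next
      case (Cons q1 qs1)
      hence ph1: "phi b1 = q1" "q1 \<in> A" using P1 unfolding phi_def by auto
      show ?thesis
      proof (cases "Pp (c,b2)")
        case Nil
        hence "phi b2 = b2" unfolding phi_def by simp
        thus ?thesis using b(3) ph1 nA by simp
      next
        case (Cons q2 qs2)
        hence ph2: "phi b2 = q2" unfolding phi_def by auto
        have q: "q2 = q1" using ph1 ph2 b(3) by simp
        have pa1: "path_arcs q1 qs1 b1 \<subseteq> E" "set qs1 \<subseteq> A" using P1 \<open>Pp (c,b1) = q1 # qs1\<close> by auto
        have pa2: "path_arcs q1 qs2 b2 \<subseteq> E" "set qs2 \<subseteq> A" using P2 Cons q by auto
        show ?thesis using FU[OF ph1(2) pa1(1) pa2(1) pa1(2) pa2(2) nA] by blast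
      qed
    qed
  qed
  show ?thesis unfolding outdeg_outn using card_image[OF inj] img by simp
qed

lemma Tarc_trancl: "Tarc \<subseteq> E\<^sup>+"
proof
  fix e assume e: "e \<in> Tarc"
  obtain c b where cb: "e = (c,b)" by (cases e)
  have "path_arcs c (Pp (c,b)) b \<subseteq> E" using P_prop e cb by blast
  thus "e \<in> E\<^sup>+" using path_trancl[of c "Pp (c,b)" b E b] cb by blast
qed

lemma T0_network: "network T0 \<and> binary T0"
proof (rule net_pres[OF N B T0_wf])
  show "fst T0 \<subseteq> fst N" using T0_fst by blast
  show "acyclic (snd T0)" unfolding T0_snd using acyclic_via_trancl[OF acE Tarc_trancl] .
  show "\<forall>t\<in>fst T0. indeg T0 t = indeg N t \<and> outdeg T0 t = outdeg N t"
  proof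
    fix t assume "t \<in> fst T0" thus "indeg T0 t = indeg N t \<and> outdeg T0 t = outdeg N t"
      using T0_indeg[of t] T0_outdeg[of t] by simp
  qed
  show "\<forall>ra. is_root N ra \<longrightarrow> ra \<in> fst T0"
  proof (intro allI impI)
    fix ra assume "is_root N ra" hence "ra = r" using root_uniq[of ra] by simp
    thus "ra \<in> fst T0" unfolding T0_fst using rV r_notA by simp
  qed
qed

lemma T0_tree: "is_tree T0"
  unfolding is_tree_def
proof (intro conjI allI notI)
  show "network T0" using T0_network by blast
  fix v assume v: "is_reticulation T0 v"
  hence vT: "v \<in> fst T0" unfolding is_reticulation_def by simp
  hence "indeg N v \<ge> 2" using v T0_indeg[OF vT] unfolding is_reticulation_def by simp
  thus False using ret_A[of v] vT T0_fst by simp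
qed

lemma T0_leaves: "leaves T0 = leaves N"
proof -
  have "v \<in> leaves T0 \<longleftrightarrow> v \<in> leaves N" for v
  proof
    assume "v \<in> leaves T0"
    hence vT: "v \<in> fst T0" "is_leaf T0 v" unfolding leaves_def by auto
    thus "v \<in> leaves N" using T0_indeg[OF vT(1)] T0_outdeg[OF vT(1)] T0_fst unfolding leaves_def is_leaf_def by auto
  next
    assume "v \<in> leaves N"
    hence l: "v \<in> fst N" "indeg N v = 1" "outdeg N v = 0" unfolding leaves_def is_leaf_def by auto
    hence "v \<notin> A" using A_deg[of v] by auto
    hence vT: "v \<in> fst T0" using l T0_fst by blast
    thus "v \<in> leaves T0" using T0_indeg[OF vT] T0_outdeg[OF vT] l unfolding leaves_def is_leaf_def by auto
  qed
  thus ?thesis by blast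
qed

end



context goodnet begin

definition TT :: "('v + nat) graph" where "TT = gmap Inl T0"
definition PP :: "('v + nat) \<times> ('v + nat) \<Rightarrow> ('v + nat) list" where
  "PP e = map Inl (Pp (projl (fst e), projl (snd e)))"
definition LL :: "(('v + nat) \<times> ('v + nat)) set" where "LL = map_prod Inl Inl ` L"

lemma injInl: "inj (Inl :: 'v \<Rightarrow> 'v + nat)" by (simp add: inj_def)

lemma TT_snd: "snd TT = map_prod Inl Inl ` Tarc" unfolding TT_def gmap_def T0_snd by simp
lemma TT_fst: "fst TT = Inl ` (fst N - A)" unfolding TT_def gmap_def T0_fst by simp

lemma TT_edge: "e \<in> snd TT \<Longrightarrow> \<exists>c b. e = (Inl c, Inl b) \<and> (c,b) \<in> Tarc \<and> PP e = map Inl (Pp (c,b))"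
  unfolding TT_snd PP_def by auto

lemma TT_tree: "is_tree TT \<and> binary TT"
proof -
  have "network T0" "binary T0" "\<forall>v. \<not> is_reticulation T0 v" using T0_network T0_tree unfolding is_tree_def by blast+
  thus ?thesis unfolding TT_def is_tree_def using gmap_network[OF injInl] gmap_binary[OF injInl] gmap_no_ret[OF injInl] by blast
qed

lemma TT_leaves: "leaves TT = Inl ` leaves N"
  unfolding TT_def using gmap_leaves[OF injInl, of T0] T0_leaves by simp

lemma valid: "valid_subdivision TT PP"
  unfolding valid_subdivision_def
proof (intro conjI ballI impI)
  fix e assume e: "e \<in> snd TT"
  then obtain c b where cb: "e = (Inl c, Inl b)" "(c,b) \<in> Tarc" "PP e = map Inl (Pp (c,b))" using TT_edge by blast
  have d: "distinct (Pp (c,b))" "set (Pp (c,b)) \<subseteq> A" using C4[OF cb(2)] by auto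
  show "distinct (PP e)" using d(1) cb(3) by (simp add: distinct_map)
  show "set (PP e) \<inter> fst TT = {}" using d(2) cb(3) unfolding TT_fst by auto
next
  fix e e' assume e: "e \<in> snd TT" "e' \<in> snd TT" "e \<noteq> e'"
  obtain c b where cb: "e = (Inl c, Inl b)" "(c,b) \<in> Tarc" "PP e = map Inl (Pp (c,b))" using TT_edge[OF e(1)] by blast
  obtain c' b' where cb': "e' = (Inl c', Inl b')" "(c',b') \<in> Tarc" "PP e' = map Inl (Pp (c',b'))" using TT_edge[OF e(2)] by blast
  have "(c,b) \<noteq> (c',b')" using e(3) cb cb' by auto
  hence "set (Pp (c,b)) \<inter> set (Pp (c',b')) = {}" using C3[OF cb(2) cb'(2)] by blast
  thus "set (PP e) \<inter> set (PP e') = {}" using cb(3) cb'(3) by auto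
qed

lemma AP: "attachment_points TT PP = Inl ` A"
proof -
  have "attachment_points TT PP = (\<Union>e\<in>Tarc. Inl ` set (Pp e))"
    unfolding attachment_points_def TT_snd PP_def by (auto simp: image_iff)
  also have "\<dots> = Inl ` (\<Union>e\<in>Tarc. set (Pp e))" by blast
  also have "\<dots> = Inl ` A" using C1 by simp
  finally show ?thesis .
qed

lemma SD_snd: "snd (subdivide TT PP) = map_prod Inl Inl ` E"
proof -
  have "snd (subdivide TT PP) = (\<Union>e\<in>Tarc. path_arcs (Inl (fst e)) (map Inl (Pp e)) (Inl (snd e)))"
    unfolding subdivide_def TT_snd PP_def by (auto simp: image_iff)
  also have "\<dots> = (\<Union>e\<in>Tarc. map_prod Inl Inl ` path_arcs (fst e) (Pp e) (snd e))"
    by (simp only: path_map)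
  also have "\<dots> = map_prod Inl Inl ` (\<Union>e\<in>Tarc. path_arcs (fst e) (Pp e) (snd e))" by blast
  also have "\<dots> = map_prod Inl Inl ` E" using C2 by simp
  finally show ?thesis .
qed

lemma SD_fst: "fst (subdivide TT PP) = Inl ` fst N"
proof -
  have "fst (subdivide TT PP) = Inl ` (fst N - A) \<union> Inl ` A" unfolding subdivide_def TT_fst AP[symmetric] by simp
  also have "\<dots> = Inl ` fst N" using AV by blast
  finally show ?thesis .
qed

lemma G2_eq: "(fst (subdivide TT PP), snd (subdivide TT PP) \<union> LL) = gmap Inl N"
proof -
  have "map_prod Inl Inl ` E \<union> map_prod Inl Inl ` L = map_prod Inl Inl ` snd N"
    using LE unfolding E_def by blast
  thus ?thesis unfolding SD_fst SD_snd LL_def gmap_def by simp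
qed

lemma main_tb: "tree_based_with N TT"
  unfolding tree_based_with_def
proof (intro conjI)
  show "is_tree TT" "binary TT" using TT_tree by blast+
  show "leaves TT = Inl ` leaves N" using TT_leaves .
  define G2 :: "('v + nat) graph" where "G2 = (fst (subdivide TT PP), snd (subdivide TT PP) \<union> LL)"
  have G2: "G2 = gmap Inl N" unfolding G2_def using G2_eq .
  have LAP: "LL \<subseteq> attachment_points TT PP \<times> attachment_points TT PP"
    unfolding AP LL_def A_def Field_def by auto
  have LD: "LL \<inter> snd (subdivide TT PP) = {}"
    unfolding SD_snd LL_def E_def by (auto simp: injInl inj_eq)
  have deg3: "\<forall>v \<in> fst G2. indeg G2 v + outdeg G2 v \<le> 3"
  proof
    fix z assume "z \<in> fst G2"
    then obtain v where v: "z = Inl v" "v \<in> fst N" unfolding G2 gmap_def by auto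
    have "indeg N v + outdeg N v \<le> 3" using network_class[OF N B v(2)] by auto
    thus "indeg G2 z + outdeg G2 z \<le> 3" unfolding G2 v(1) gmap_indeg[OF injInl] gmap_outdeg[OF injInl] .
  qed
  have acy: "acyclic (snd G2)" unfolding G2 gmap_def using gmap_acyclic[OF injInl ac0] by simp
  have xs: "set ([] :: ('v + nat) list) = {a \<in> attachment_points TT PP. \<forall>b. (a, b) \<notin> LL \<and> (b, a) \<notin> LL}"
  proof -
    { fix a assume a: "a \<in> attachment_points TT PP" "\<forall>b. (a, b) \<notin> LL \<and> (b, a) \<notin> LL"
      then obtain x where x: "a = Inl x" "x \<in> A" unfolding AP by blast
      then obtain y where "(x,y) \<in> L \<or> (y,x) \<in> L" unfolding A_def Field_def by blast
      hence "(a, Inl y) \<in> LL \<or> (Inl y, a) \<in> LL" unfolding LL_def x(1) by force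
      hence False using a(2) by blast }
    thus ?thesis by auto
  qed
  have bij: "bij_betw projl (fst G2) (fst N)"
    unfolding G2 gmap_def by (auto simp: bij_betw_def inj_on_def image_iff)
  have arcs: "\<forall>a \<in> fst G2. \<forall>b \<in> fst G2. (a, b) \<in> snd G2 \<longleftrightarrow> (projl a, projl b) \<in> snd N"
    unfolding G2 gmap_def by auto
  have lv: "\<forall>x \<in> leaves N. projl (Inl x :: 'v + nat) = x" by simp
  show "\<exists>P L xs f. valid_subdivision TT P \<and>
        L \<subseteq> attachment_points TT P \<times> attachment_points TT P \<and>
        L \<inter> snd (subdivide TT P) = {} \<and>
        (let G2 = (fst (subdivide TT P), snd (subdivide TT P) \<union> L)
         in (\<forall>v\<in>fst G2. indeg G2 v + outdeg G2 v \<le> 3) \<and> acyclic (snd G2) \<and> distinct xs \<and>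
            set xs = {a \<in> attachment_points TT P. \<forall>b. (a, b) \<notin> L \<and> (b, a) \<notin> L} \<and>
            (let G3 = fold suppress xs G2
             in bij_betw f (fst G3) (fst N) \<and> (\<forall>a\<in>fst G3. \<forall>b\<in>fst G3. ((a, b) \<in> snd G3) = ((f a, f b) \<in> snd N)) \<and>
                (\<forall>x\<in>leaves N. f (Inl x) = x)))"
    apply (rule exI[of _ PP], rule exI[of _ LL], rule exI[of _ "[]"], rule exI[of _ projl])
    using valid LAP LD deg3 acy xs bij arcs lv unfolding Let_def G2_def[symmetric] by simp
qed

lemma main_tree_based: "tree_based N"
  unfolding tree_based_def using B N main_tb by blast

end

theorem mainTheorem6:
  fixes N :: "'v graph"
  assumes "network N" and "binary N" and "orchard N"
  shows "tree_based N"
proof -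
  obtain L where "good N L" using orchard_good[OF assms] by blast
  then interpret goodnet N L using assms by unfold_locales
  show ?thesis using main_tree_based .
qed



end
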